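(* Let $p(x)=a_dx^d+\cdots+a_1x$ be a polynomial with real coefficients, $d\geq2$, with $p(0)=0$ and $p'(0)=\lambda>1$. Suppose that $\mathcal{F}_\infty$, the Fatou component of $p$ containing $\infty$, contains an angular region $$W_\beta=\{z\in\mathbb{C}\setminus\{0\}: |\arg z|<\beta\}$$ for some $\beta>0$. Let $\Phi$ be the solution of $\Phi(\lambda z)=p(\Phi(z))$, $\Phi(0)=0$, $\Phi'(0)=1$. Then $\Phi$ is an entire function, and there is a function $F$, holomorphic and periodic with period $1$ on the strip $\{w\in\mathbb{C}: |\Im w|<\frac{\beta}{\log\lambda}\}$ and taking real values on the real axis, such that for every $\varepsilon>0$ and every $M>0$ $$\Phi(z)=\frac{1}{\sqrt[d-1]{a_d}}\exp\left(z^\rho F(\log_\lambda z)+o\left(|z|^{-M}\right)\right)$$ holds uniformly as $|z|\to\infty$ in $|\arg z|\leq\beta-\varepsilon$, where $\rho=\log_\lambda d$. Moreover, the real part of $z^\rho F(\log_\lambda z)$ is always positive (in this region).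
   Context: $\log_\lambda z=\frac{\log z}{\log\lambda}$ (principal branch). The Fatou set and Julia set of a polynomial are the standard notions from complex dynamics; $\mathcal{F}_\infty$ is the connected component of the Fatou set (in the Riemann sphere) containing $\infty$. *)

theory Defs
  imports "HOL-Complex_Analysis.Complex_Analysis" "HOL-Computational_Algebra.Polynomial"
begin

text \<open>A family of functions is normal on U (in the sense of complex dynamics, i.e.
  with respect to the spherical metric): every sequence from the family has a
  subsequence converging locally uniformly on U either to a finite function or to
  infinity.\<close>
definition normal_family_on :: "complex set \<Rightarrow> (complex \<Rightarrow> complex) set \<Rightarrow> bool" where
  "normal_family_on U \<F> \<longleftrightarrow>
     (\<forall>f :: nat \<Rightarrow> complex \<Rightarrow> complex. (\<forall>n. f n \<in> \<F>) \<longrightarrow>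
        (\<exists>r. strict_mono r \<and>
           ((\<exists>g. \<forall>K. compact K \<and> K \<subseteq> U \<longrightarrow> uniform_limit K (\<lambda>n. f (r n)) g sequentially)
            \<or> (\<forall>K. compact K \<and> K \<subseteq> U \<longrightarrow>
                 (\<forall>B. \<forall>\<^sub>F n in sequentially. \<forall>z\<in>K. B \<le> norm (f (r n) z))))))"

definition fatou_set :: "complex poly \<Rightarrow> complex set" where
  "fatou_set p = {z. \<exists>U. open U \<and> z \<in> U \<and> normal_family_on U (range (\<lambda>n. poly p ^^ n))}"

text \<open>Finite part of the Fatou component containing infinity: the points of the
  Fatou set lying in the same connected component (of the finite Fatou set) as all
  sufficiently large points.  Since removing the point infinity from an open connected
  subset of the Riemann sphere leaves it connected, this is exactly
  the component of infinity in the sphere, minus infinity.\<close>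
definition fatou_inf :: "complex poly \<Rightarrow> complex set" where
  "fatou_inf p = {z. \<exists>R. \<forall>w. R < norm w \<longrightarrow> connected_component (fatou_set p) z w}"

definition angular_region :: "real \<Rightarrow> complex set" where
  "angular_region \<beta> = {z. z \<noteq> 0 \<and> \<bar>Arg z\<bar> < \<beta>}"

definition log_base_c :: "real \<Rightarrow> complex \<Rightarrow> complex" where
  "log_base_c lam z = Ln z / of_real (ln lam)"

end

theory Submission
  imports Defs
begin


lemma iter_growth:
  fixes p :: "complex poly"
  assumes hR: "\<And>u. R \<le> norm u \<Longrightarrow> 2 * norm u \<le> norm (poly p u)" and R: "R > 0"
    and x: "R \<le> norm x"
  shows "2^k * norm x \<le> norm ((poly p ^^ k) x)"
proof (induction k)
  case 0 then show ?case by simp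
next
  case (Suc k)
  have "R \<le> 2^k * norm x" using x R
  proof -
    have "1 * norm x \<le> 2^k * norm x" by (intro mult_right_mono) auto
    then show ?thesis using x by linarith
  qed
  then have "R \<le> norm ((poly p ^^ k) x)" using Suc by linarith
  then have "2 * norm ((poly p ^^ k) x) \<le> norm ((poly p ^^ Suc k) x)" using hR by simp
  then show ?case using Suc by simp
qed

lemma poly_tail_bound:
  fixes p :: "complex poly" and u :: complex
  assumes "degree p = d" "d \<ge> 1" "norm u \<ge> 1"
  shows "norm (poly p u - lead_coeff p * u ^ d) \<le> (\<Sum>i<d. norm (coeff p i)) * norm u ^ (d - 1)"
proof -
  have "poly p u = (\<Sum>i<Suc d. coeff p i * u ^ i)"
    using assms(1) by (simp add: poly_altdef lessThan_Suc_atMost)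
  also have "\<dots> = (\<Sum>i<d. coeff p i * u ^ i) + lead_coeff p * u ^ d"
    using assms(1) by simp
  finally have "poly p u - lead_coeff p * u ^ d = (\<Sum>i<d. coeff p i * u ^ i)" by simp
  also have "norm \<dots> \<le> (\<Sum>i<d. norm (coeff p i * u ^ i))" by (rule norm_sum)
  also have "\<dots> \<le> (\<Sum>i<d. norm (coeff p i) * norm u ^ (d - 1))"
  proof (rule sum_mono)
    fix i assume "i \<in> {..<d}"
    then have "norm u ^ i \<le> norm u ^ (d - 1)" using assms(3) by (intro power_increasing) auto
    then show "norm (coeff p i * u ^ i) \<le> norm (coeff p i) * norm u ^ (d - 1)"
      by (simp add: norm_mult norm_power mult_left_mono)
  qed
  also have "\<dots> = (\<Sum>i<d. norm (coeff p i)) * norm u ^ (d - 1)" by (simp add: sum_distrib_right)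
  finally show ?thesis .
qed

lemma poly_infty_est:
  fixes p :: "complex poly"
  assumes "degree p = d" "d \<ge> 2"
  obtains R0 C where "R0 > 0" "C > 0"
    "\<And>u. R0 \<le> norm u \<Longrightarrow> 2 * norm u \<le> norm (poly p u)"
    "\<And>u. R0 \<le> norm u \<Longrightarrow> norm (poly p u / (lead_coeff p * u ^ d) - 1) \<le> C / norm u"
    "\<And>u::complex. R0 \<le> norm u \<Longrightarrow> C / norm u \<le> 1/4"
proof -
  define a where "a = lead_coeff p"
  have a0: "a \<noteq> 0" using assms by (auto simp: a_def)
  define S where "S = (\<Sum>i<d. norm (coeff p i))"
  define C where "C = S / norm a + 1"
  have S0: "S \<ge> 0" unfolding S_def by (simp add: sum_nonneg)
  have C0: "C > 0" unfolding C_def using S0 a0 by (simp add: add_nonneg_pos)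
  define R0 where "R0 = max 1 (max (4 * C) (4 / norm a))"
  have R0: "R0 > 0" "R0 \<ge> 1" unfolding R0_def by auto
  have est: "norm (poly p u / (a * u ^ d) - 1) \<le> C / norm u" if u: "R0 \<le> norm u" for u
  proof -
    have u1: "norm u \<ge> 1" using u R0 by linarith
    then have u0: "u \<noteq> 0" by auto
    have "poly p u / (a * u ^ d) - 1 = (poly p u - a * u ^ d) / (a * u ^ d)"
      using a0 u0 by (simp add: field_simps)
    also have "norm \<dots> = norm (poly p u - a * u ^ d) / (norm a * norm u ^ d)"
      by (simp add: norm_divide norm_mult norm_power)
    also have "\<dots> \<le> S * norm u ^ (d - 1) / (norm a * norm u ^ d)"
      using poly_tail_bound[of p d u] assms u1 a0 u0
      by (intro divide_right_mono) (auto simp: S_def a_def)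
    also have "\<dots> = (S / norm a) / norm u"
    proof -
      obtain m where m: "d = Suc m" using assms by (cases d) auto
      have "norm u ^ d = norm u ^ (d - 1) * norm u" unfolding m by simp
      then show ?thesis using a0 u0 by (simp add: field_simps)
    qed
    also have "\<dots> \<le> C / norm u" unfolding C_def using u0 by (intro divide_right_mono) auto
    finally show ?thesis .
  qed
  have small: "C / norm u \<le> 1/4" if u: "R0 \<le> norm u" for u :: complex
  proof -
    have "4 * C \<le> norm u" using u unfolding R0_def by linarith
    moreover have "norm u > 0" using u R0 by linarith
    ultimately show ?thesis by (simp add: field_simps)
  qed
  have grow: "2 * norm u \<le> norm (poly p u)" if u: "R0 \<le> norm u" for u
  proof -
    have u1: "norm u \<ge> 1" using u R0 by linarith
    then have u0: "u \<noteq> 0" by auto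
    have q: "norm (poly p u / (a * u ^ d) - 1) \<le> 1/4" using est[OF u] small[OF u] by linarith
    have "norm (poly p u / (a * u ^ d)) \<ge> 3/4"
      using q norm_triangle_ineq2[of 1 "poly p u / (a * u ^ d)"] by (simp add: norm_minus_commute)
    then have "norm (poly p u) \<ge> 3/4 * (norm a * norm u ^ d)"
      using a0 u0 by (simp add: norm_divide norm_mult norm_power field_simps)
    moreover have "norm a * norm u ^ d \<ge> 4 * norm u"
    proof -
      have "4 / norm a \<le> norm u" using u unfolding R0_def by linarith
      then have "4 \<le> norm a * norm u" using a0 by (simp add: field_simps)
      moreover have "norm u ^ d \<ge> norm u ^ 2" using u1 assms by (intro power_increasing) auto
      ultimately have "norm a * norm u ^ d \<ge> norm a * norm u ^ 2"
        using a0 by (intro mult_left_mono) auto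
      also have "norm a * norm u ^ 2 = (norm a * norm u) * norm u" by (simp add: power2_eq_square)
      also have "\<dots> \<ge> 4 * norm u" using \<open>4 \<le> norm a * norm u\<close> by (intro mult_right_mono) auto
      finally show ?thesis by linarith
    qed
    then have "3/4 * (4 * norm u) \<le> 3/4 * (norm a * norm u ^ d)" by (intro mult_left_mono) auto
    ultimately show ?thesis using norm_ge_zero[of u] by linarith
  qed
  show ?thesis using that[OF R0(1) C0 grow] est small unfolding a_def by blast
qed



lemma poly_holo: "poly (p::complex poly) holomorphic_on S"
  unfolding holomorphic_on_def field_differentiable_def
  using poly_DERIV[of p] by (metis DERIV_subset top_greatest)

lemma iter_holo: "(poly (p::complex poly) ^^ n) holomorphic_on S"
proof (induction n arbitrary: S)
  case 0 then show ?case by (simp add: holomorphic_on_ident id_def)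
next
  case (Suc n)
  have "(poly p \<circ> (poly p ^^ n)) holomorphic_on S"
    by (rule holomorphic_on_compose[OF Suc poly_holo])
  then show ?case by (simp add: o_def)
qed

lemma iter_cont: "continuous_on S (poly (p::complex poly) ^^ n)"
  by (rule holomorphic_on_imp_continuous_on[OF iter_holo])

lemma iter_shift: "(f ^^ (k + m)) x = (f ^^ k) ((f ^^ m) x)"
  by (simp add: funpow_add)

lemma iter_growth2:
  fixes p :: "complex poly"
  assumes hR: "\<And>u. R \<le> norm u \<Longrightarrow> 2 * norm u \<le> norm (poly p u)" and R: "R > 0"
    and x: "R < norm ((poly p ^^ m) x)" and mn: "m \<le> n"
  shows "2^(n-m) * norm ((poly p ^^ m) x) \<le> norm ((poly p ^^ n) x)"
proof -
  have "(poly p ^^ n) x = (poly p ^^ (n - m)) ((poly p ^^ m) x)"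
    using mn iter_shift[of "n - m" m "poly p" x] by simp
  then show ?thesis using iter_growth[OF hR R, of "(poly p ^^ m) x" "n - m"] x by simp
qed

lemma iter_escape_mono:
  fixes p :: "complex poly"
  assumes hR: "\<And>u. R \<le> norm u \<Longrightarrow> 2 * norm u \<le> norm (poly p u)" and R: "R > 0"
    and x: "R < norm ((poly p ^^ m) x)" and mn: "m \<le> n"
  shows "R < norm ((poly p ^^ n) x)"
proof -
  have "1 * norm ((poly p ^^ m) x) \<le> 2^(n-m) * norm ((poly p ^^ m) x)"
    by (intro mult_right_mono) auto
  then show ?thesis using iter_growth2[OF hR R x mn] x by linarith
qed

lemma normal_dichotomy:
  fixes p :: "complex poly"
  assumes hR: "\<And>u. R \<le> norm u \<Longrightarrow> 2 * norm u \<le> norm (poly p u)" and R: "R > 0"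
    and U: "normal_family_on U (range (\<lambda>n. poly p ^^ n))"
    and xU: "x \<in> U" and yU: "y \<in> U" and ym: "R < norm ((poly p ^^ m) y)"
  shows "\<exists>n. R < norm ((poly p ^^ n) x)"
proof -
  obtain r where r: "strict_mono r" and
    cases: "(\<exists>g. \<forall>K. compact K \<and> K \<subseteq> U \<longrightarrow> uniform_limit K (\<lambda>n. (poly p ^^ (r n))) g sequentially)
            \<or> (\<forall>K. compact K \<and> K \<subseteq> U \<longrightarrow>
                 (\<forall>B. \<forall>\<^sub>F n in sequentially. \<forall>z\<in>K. B \<le> norm ((poly p ^^ (r n)) z)))"
    using U unfolding normal_family_on_def by (erule_tac x="\<lambda>n. poly p ^^ n" in allE) auto
  have K: "compact {x, y}" "{x, y} \<subseteq> U" using xU yU by auto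
  show ?thesis
  proof (cases "\<exists>g. \<forall>K. compact K \<and> K \<subseteq> U \<longrightarrow> uniform_limit K (\<lambda>n. (poly p ^^ (r n))) g sequentially")
    case True
    then obtain g where "uniform_limit {x, y} (\<lambda>n. (poly p ^^ (r n))) g sequentially" using K by blast
    then have "(\<lambda>n. (poly p ^^ (r n)) y) \<longlonglongrightarrow> g y" by (rule tendsto_uniform_limitI) auto
    then have "bounded (range (\<lambda>n. (poly p ^^ (r n)) y))" by (rule convergent_imp_bounded)
    then obtain Bd where Bd: "\<And>n. norm ((poly p ^^ (r n)) y) \<le> Bd"
      unfolding bounded_iff by blast
    obtain k where k: "Bd / R < 2 ^ k" using real_arch_pow[of 2 "Bd / R"] by auto
    have "m + k \<le> r (m + k)" using r by (rule strict_mono_imp_increasing)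
    then have "2^(r (m+k) - m) * norm ((poly p ^^ m) y) \<le> norm ((poly p ^^ r (m+k)) y)"
      by (intro iter_growth2[OF hR R ym]) auto
    moreover have "2^k * R \<le> 2^(r (m+k) - m) * norm ((poly p ^^ m) y)"
    proof -
      have "(2::real)^k \<le> 2^(r (m+k) - m)" using \<open>m + k \<le> r (m + k)\<close> by (intro power_increasing) auto
      then show ?thesis using ym R by (intro mult_mono) auto
    qed
    moreover have "Bd < 2^k * R" using k R by (simp add: field_simps)
    ultimately show ?thesis using Bd[of "m+k"] by linarith
  next
    case False
    then have "\<forall>B. \<forall>\<^sub>F n in sequentially. \<forall>z\<in>{x}. B \<le> norm ((poly p ^^ (r n)) z)"
    proof (intro allI)
      fix B show "\<forall>\<^sub>F n in sequentially. \<forall>z\<in>{x}. B \<le> norm ((poly p ^^ (r n)) z)"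
      proof -
        have D: "\<forall>K. compact K \<and> K \<subseteq> U \<longrightarrow>
                 (\<forall>B. \<forall>\<^sub>F n in sequentially. \<forall>z\<in>K. B \<le> norm ((poly p ^^ (r n)) z))"
          using cases False by blast
        show ?thesis using D[rule_format, of "{x}" B] xU by simp
      qed
    qed
    then have "\<forall>\<^sub>F n in sequentially. \<forall>z\<in>{x}. R + 1 \<le> norm ((poly p ^^ (r n)) z)" by blast
    then have "\<forall>\<^sub>F n in sequentially. R + 1 \<le> norm ((poly p ^^ (r n)) x)" by simp
    then obtain n where "R + 1 \<le> norm ((poly p ^^ (r n)) x)" using eventually_sequentially by auto
    then show ?thesis by (intro exI[of _ "r n"]) auto
  qed
qed

lemma fatou_inf_escape:
  fixes p :: "complex poly"
  assumes hR: "\<And>u. R \<le> norm u \<Longrightarrow> 2 * norm u \<le> norm (poly p u)" and R: "R > 0"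
    and z: "z \<in> fatou_inf p"
  shows "\<exists>n. R < norm ((poly p ^^ n) z)"
proof -
  define Esc where "Esc = {x. \<exists>n. R < norm ((poly p ^^ n) x)}"
  define N where "N = (\<lambda>U. open U \<and> normal_family_on U (range (\<lambda>n. poly p ^^ n)))"
  define A where "A = {x. \<exists>U. N U \<and> x \<in> U \<and> U \<subseteq> Esc}"
  define B where "B = {x. \<exists>U. N U \<and> x \<in> U \<and> U \<inter> Esc = {}}"
  have oA: "open A" unfolding open_subopen[of A]
  proof
    fix x assume "x \<in> A"
    then obtain U where "N U" "x \<in> U" "U \<subseteq> Esc" unfolding A_def by auto
    then show "\<exists>T. open T \<and> x \<in> T \<and> T \<subseteq> A" unfolding A_def N_def by (intro exI[of _ U]) auto
  qed
  have oB: "open B" unfolding open_subopen[of B]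
  proof
    fix x assume "x \<in> B"
    then obtain U where "N U" "x \<in> U" "U \<inter> Esc = {}" unfolding B_def by auto
    then show "\<exists>T. open T \<and> x \<in> T \<and> T \<subseteq> B" unfolding B_def N_def by (intro exI[of _ U]) auto
  qed
  have AB: "A \<inter> B = {}" unfolding A_def B_def by blast
  have cover: "fatou_set p \<subseteq> A \<union> B"
  proof
    fix x assume "x \<in> fatou_set p"
    then obtain U where U: "open U" "x \<in> U" "normal_family_on U (range (\<lambda>n. poly p ^^ n))"
      unfolding fatou_set_def by auto
    show "x \<in> A \<union> B"
    proof (cases "U \<inter> Esc = {}")
      case True then show ?thesis using U unfolding B_def N_def by blast
    next
      case False
      then obtain y m where y: "y \<in> U" "R < norm ((poly p ^^ m) y)" unfolding Esc_def by auto
      have "U \<subseteq> Esc" unfolding Esc_def using normal_dichotomy[OF hR R U(3) _ y] by auto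
      then show ?thesis using U unfolding A_def N_def by blast
    qed
  qed
  have BE: "B \<inter> Esc = {}" unfolding B_def by blast
  obtain R1 where R1: "\<And>w. R1 < norm w \<Longrightarrow> connected_component (fatou_set p) z w"
    using z unfolding fatou_inf_def by auto
  define w where "w = complex_of_real (max R1 R + 1)"
  have nw: "norm w = max R1 R + 1" unfolding w_def using R by (simp add: abs_if)
  have "connected_component (fatou_set p) z w" using R1 nw by auto
  then obtain T where T: "connected T" "T \<subseteq> fatou_set p" "z \<in> T" "w \<in> T"
    unfolding connected_component_def by blast
  have wE: "w \<in> Esc" unfolding Esc_def using nw by (intro CollectI exI[of _ 0]) auto
  have "A \<inter> B \<inter> T = {}" using AB by auto
  then have "A \<inter> T = {} \<or> B \<inter> T = {}" using connectedD[OF T(1) oA oB] T(2) cover by blast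
  moreover have "w \<in> A" using wE BE T cover by blast
  ultimately have "z \<in> A" using T cover by blast
  then show ?thesis unfolding A_def Esc_def by blast
qed

lemma compact_escape:
  fixes p :: "complex poly"
  assumes hR: "\<And>u. R \<le> norm u \<Longrightarrow> 2 * norm u \<le> norm (poly p u)" and R: "R > 0"
    and K: "compact K" "K \<subseteq> fatou_inf p"
  shows "\<exists>N. \<forall>n\<ge>N. \<forall>x\<in>K. R < norm ((poly p ^^ n) x)"
proof -
  define V where "V = (\<lambda>n. {x. R < norm ((poly p ^^ n) x)})"
  have oV: "open (V n)" for n
  proof -
    have "continuous_on UNIV (\<lambda>x. norm ((poly p ^^ n) x))"
      by (intro continuous_intros iter_cont)
    then show ?thesis unfolding V_def using open_Collect_less[of "\<lambda>x. R" "\<lambda>x. norm ((poly p ^^ n) x)"]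
      by (simp add: continuous_on_const)
  qed
  have "K \<subseteq> (\<Union>n\<in>UNIV. V n)" using fatou_inf_escape[OF hR R] K(2) unfolding V_def by blast
  then obtain C where C: "finite C" "K \<subseteq> (\<Union>n\<in>C. V n)"
    using compactE_image[OF K(1), of UNIV V] oV by metis
  define N where "N = Max (insert 0 C)"
  have "\<forall>n\<ge>N. \<forall>x\<in>K. R < norm ((poly p ^^ n) x)"
  proof (intro allI impI ballI)
    fix n x assume n: "N \<le> n" and x: "x \<in> K"
    then obtain m where m: "m \<in> C" "x \<in> V m" using C by blast
    have "m \<le> N" unfolding N_def using C(1) m(1) by simp
    then show "R < norm ((poly p ^^ n) x)"
      using iter_escape_mono[OF hR R, of m x n] m n unfolding V_def by auto
  qed
  then show ?thesis by blast
qed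



lemma pow_diff_term:
  fixes a b :: complex
  assumes "norm a \<le> \<rho>" "norm b \<le> \<rho>" "\<rho> \<le> 1"
  shows "norm ((a^i - b^i) - (if i = 1 then a - b else 0)) \<le> real i * \<rho> * norm (a - b)"
proof -
  consider "i = 0" | "i = 1" | "i \<ge> 2" by linarith
  then show ?thesis
  proof cases
    case 1 then show ?thesis by simp
  next
    case 2
    have "\<rho> \<ge> 0" using assms(1) norm_ge_zero order_trans by blast
    then show ?thesis using 2 by simp
  next
    case 3
    have r0: "\<rho> \<ge> 0" using assms(1) norm_ge_zero order_trans by blast
    have "a^i - b^i = (a - b) * (\<Sum>j<i. b^(i - Suc j) * a^j)" by (rule power_diff_sumr2)
    then have "norm (a^i - b^i) = norm (a - b) * norm (\<Sum>j<i. b^(i - Suc j) * a^j)"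
      by (simp add: norm_mult)
    also have "norm (\<Sum>j<i. b^(i - Suc j) * a^j) \<le> (\<Sum>j<i. \<rho>)"
    proof -
      have "norm (\<Sum>j<i. b^(i - Suc j) * a^j) \<le> (\<Sum>j<i. norm (b^(i - Suc j) * a^j))" by (rule norm_sum)
      also have "\<dots> \<le> (\<Sum>j<i. \<rho>)"
      proof (rule sum_mono)
        fix j assume j: "j \<in> {..<i}"
        have "norm (b^(i - Suc j) * a^j) = norm b ^ (i - Suc j) * norm a ^ j" by (simp add: norm_mult norm_power)
        also have "\<dots> \<le> \<rho> ^ (i - Suc j) * \<rho> ^ j" using assms r0 by (intro mult_mono power_mono) auto
        also have "\<dots> = \<rho> ^ (i - 1)" using j by (simp add: power_add[symmetric])
        also have "\<dots> \<le> \<rho> ^ 1" using 3 r0 assms(3) by (intro power_decreasing) auto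
        finally show "norm (b^(i - Suc j) * a^j) \<le> \<rho>" by simp
      qed
      finally show ?thesis .
    qed
    then have "norm (a - b) * norm (\<Sum>j<i. b^(i - Suc j) * a^j) \<le> norm (a - b) * (real i * \<rho>)"
      by (intro mult_left_mono) auto
    finally show ?thesis using 3 by (simp add: algebra_simps)
  qed
qed

lemma poly_diff_bound:
  fixes p :: "complex poly"
  assumes "coeff p 0 = 0" "degree p = d" "d \<ge> 1"
  obtains C where "C \<ge> 0" "\<And>a b \<rho>. norm a \<le> \<rho> \<Longrightarrow> norm b \<le> \<rho> \<Longrightarrow> \<rho> \<le> 1 \<Longrightarrow>
     norm (poly p a - poly p b - coeff p 1 * (a - b)) \<le> C * \<rho> * norm (a - b)"
proof -
  define C where "C = (\<Sum>i\<le>d. norm (coeff p i) * real i)"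
  have C0: "C \<ge> 0" unfolding C_def by (intro sum_nonneg) auto
  have "norm (poly p a - poly p b - coeff p 1 * (a - b)) \<le> C * \<rho> * norm (a - b)"
    if ab: "norm a \<le> \<rho>" "norm b \<le> \<rho>" "\<rho> \<le> 1" for a b \<rho>
  proof -
    have c1: "coeff p 1 * (a - b) = (\<Sum>i\<le>d. coeff p i * (if i = 1 then a - b else 0))"
      using assms(3) by (simp add: if_distrib sum.delta cong: if_cong)
    have "poly p a - poly p b - coeff p 1 * (a - b)
        = (\<Sum>i\<le>d. coeff p i * ((a^i - b^i) - (if i = 1 then a - b else 0)))"
    proof -
      have "(\<Sum>i\<le>d. coeff p i * ((a^i - b^i) - (if i = 1 then a - b else 0)))
          = (\<Sum>i\<le>d. coeff p i * a^i) - (\<Sum>i\<le>d. coeff p i * b^i)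
            - (\<Sum>i\<le>d. coeff p i * (if i = 1 then a - b else 0))"
        by (simp add: right_diff_distrib sum_subtractf)
      then show ?thesis unfolding c1 using assms(2) by (simp add: poly_altdef)
    qed
    also have "norm \<dots> \<le> (\<Sum>i\<le>d. norm (coeff p i) * (real i * \<rho> * norm (a - b)))"
    proof (rule order_trans[OF norm_sum], rule sum_mono)
      fix i assume "i \<in> {..d}"
      have "norm (coeff p i * ((a^i - b^i) - (if i = 1 then a - b else 0)))
          = norm (coeff p i) * norm ((a^i - b^i) - (if i = 1 then a - b else 0))" by (rule norm_mult)
      also have "\<dots> \<le> norm (coeff p i) * (real i * \<rho> * norm (a - b))"
        by (intro mult_left_mono pow_diff_term[OF ab]) auto
      finally show "norm (coeff p i * ((a^i - b^i) - (if i = 1 then a - b else 0)))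
          \<le> norm (coeff p i) * (real i * \<rho> * norm (a - b))" .
    qed
    also have "\<dots> = C * (\<rho> * norm (a - b))" unfolding C_def by (subst sum_distrib_right) (simp add: mult_ac)
    finally show ?thesis by (simp add: mult.assoc)
  qed
  then show ?thesis using that C0 by blast
qed

lemma Arg_le:
  assumes "r > 0" shows "\<bar>Arg (of_real r * exp (\<i> * of_real t))\<bar> \<le> \<bar>t\<bar>"
proof (cases "\<bar>t\<bar> < pi")
  case True
  show ?thesis
  proof (cases "t = pi")
    case False
    then have "Arg (of_real r * exp (\<i> * of_real t)) = t"
      using True assms by (intro Arg_unique) auto
    then show ?thesis by simp
  qed (use True in auto)
next
  case False
  then show ?thesis using Arg_bounded[of "of_real r * exp (\<i> * of_real t)"] by auto
qed

lemma Arg_exp_le: "\<bar>Arg (exp z)\<bar> \<le> \<bar>Im z\<bar>"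
proof -
  have "z = of_real (Re z) + \<i> * of_real (Im z)" by (simp add: complex_eq_iff)
  then have "exp z = exp (of_real (Re z)) * exp (\<i> * of_real (Im z))" by (metis exp_add)
  then have "exp z = of_real (exp (Re z)) * exp (\<i> * of_real (Im z))" by (simp only: exp_of_real)
  then show ?thesis using Arg_le[of "exp (Re z)" "Im z"] by simp
qed

lemma Arg_mult_le:
  assumes "u \<noteq> 0" "q \<noteq> 0"
  shows "\<bar>Arg (u * q)\<bar> \<le> \<bar>Arg u\<bar> + \<bar>Arg q\<bar>"
proof -
  have u: "u = of_real (norm u) * exp (\<i> * of_real (Arg u))" using Arg_eq assms by blast
  have q: "q = of_real (norm q) * exp (\<i> * of_real (Arg q))" using Arg_eq assms by blast
  have "u * q = of_real (norm u * norm q) * exp (\<i> * of_real (Arg u + Arg q))"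
    by (subst u, subst q) (simp add: exp_add algebra_simps)
  then have "\<bar>Arg (u * q)\<bar> \<le> \<bar>Arg u + Arg q\<bar>"
    using Arg_le[of "norm u * norm q" "Arg u + Arg q"] assms by simp
  then show ?thesis by linarith
qed



lemma fun_iter:
  assumes "\<forall>z. f (of_real lam * z) = poly p (f z)"
  shows "f (of_real lam ^ n * z) = (poly p ^^ n) (f z)"
proof (induction n)
  case 0 then show ?case by simp
next
  case (Suc n)
  have "f (of_real lam ^ Suc n * z) = f (of_real lam * (of_real lam ^ n * z))" by (simp add: mult.assoc)
  also have "\<dots> = poly p (f (of_real lam ^ n * z))" using assms by blast
  finally show ?case using Suc by simp
qed

lemma poly_cnj_real:
  fixes p :: "complex poly"
  assumes "\<forall>i. coeff p i \<in> \<real>"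
  shows "poly p (cnj u) = cnj (poly p u)"
proof -
  have "cnj (coeff p i) = coeff p i" for i using assms Reals_cnj_iff by blast
  then show ?thesis by (simp add: poly_altdef)
qed

locale ctx =
  fixes p :: "complex poly" and d :: nat and lam \<beta> :: real and \<Phi> :: "complex \<Rightarrow> complex"
  assumes real_coeffs: "\<forall>i. coeff p i \<in> \<real>"
    and deg: "degree p = d" and d2: "d \<ge> 2"
    and p0: "coeff p 0 = 0"
    and p1: "coeff p 1 = of_real lam" and lam1: "lam > 1"
    and beta0: "\<beta> > 0" and betaF: "angular_region \<beta> \<subseteq> fatou_inf p"
    and Phi_hol0: "\<exists>r>0. \<Phi> holomorphic_on ball 0 r"
    and Phi_eq: "\<forall>z. \<Phi> (of_real lam * z) = poly p (\<Phi> z)"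
    and Phi0: "\<Phi> 0 = 0"
    and Phi'0: "(\<Phi> has_field_derivative 1) (at 0)"
begin

lemma Phi_iter: "\<Phi> (of_real lam ^ n * z) = (poly p ^^ n) (\<Phi> z)"
  using fun_iter[OF Phi_eq] .

lemma Phi_iter': "\<Phi> z = (poly p ^^ n) (\<Phi> (z / of_real (lam ^ n)))"
proof -
  have "of_real lam ^ n * (z / of_real (lam ^ n)) = z" using lam1 by simp
  then show ?thesis using Phi_iter[of n "z / of_real (lam ^ n)"] by simp
qed

lemma Phi_entire: "\<Phi> holomorphic_on S"
proof (rule holomorphic_on_balls_imp_entire'[of _ 0])
  fix r' :: real assume "r' > 0"
  obtain r where r: "r > 0" "\<Phi> holomorphic_on ball 0 r" using Phi_hol0 by auto
  obtain n where n: "r' / r < lam ^ n" using real_arch_pow[OF lam1] by auto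
  have lp: "lam ^ n > 0" using lam1 by simp
  have "\<Phi> holomorphic_on ball 0 (r * lam ^ n)"
  proof (rule holomorphic_transform)
    have h1: "(\<lambda>z::complex. z / of_real (lam ^ n)) holomorphic_on ball 0 (r * lam ^ n)"
      by (intro holomorphic_intros) (use lp in auto)
    have h2: "(\<lambda>z::complex. z / of_real (lam ^ n)) ` ball 0 (r * lam ^ n) \<subseteq> ball 0 r"
    proof (rule image_subsetI)
      fix z :: complex assume "z \<in> ball 0 (r * lam ^ n)"
      then have z: "norm z < r * lam ^ n" by simp
      have "norm (z / of_real (lam ^ n)) = norm z / lam ^ n" using lp lam1 by (simp add: norm_divide norm_power)
      also have "\<dots> < r" using z lp by (simp add: divide_less_eq)
      finally show "z / of_real (lam ^ n) \<in> ball 0 r" by simp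
    qed
    have "(\<Phi> \<circ> (\<lambda>z. z / of_real (lam ^ n))) holomorphic_on ball 0 (r * lam ^ n)"
      by (rule holomorphic_on_compose_gen[OF h1 r(2) h2])
    then have "((poly p ^^ n) \<circ> (\<Phi> \<circ> (\<lambda>z. z / of_real (lam ^ n)))) holomorphic_on ball 0 (r * lam ^ n)"
      by (rule holomorphic_on_compose[OF _ iter_holo])
    then show "(\<lambda>z. (poly p ^^ n) (\<Phi> (z / of_real (lam ^ n)))) holomorphic_on ball 0 (r * lam ^ n)"
      by (simp add: o_def)
  next
    fix z show "(poly p ^^ n) (\<Phi> (z / of_real (lam ^ n))) = \<Phi> z" using Phi_iter' by simp
  qed
  moreover have "r' < r * lam ^ n" using n r by (simp add: field_simps)
  ultimately show "\<Phi> holomorphic_on ball 0 r'" by (meson holomorphic_on_subset less_imp_le subset_ball)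
qed

lemma Phi_small:
  assumes "\<epsilon> > 0"
  shows "\<exists>\<delta>>0. \<forall>u. norm u < \<delta> \<longrightarrow> norm (\<Phi> u - u) \<le> \<epsilon> * norm u"
proof -
  have "((\<lambda>y. (\<Phi> y - \<Phi> 0) / (y - 0)) \<longlongrightarrow> 1) (at 0)"
    using Phi'0 has_field_derivative_iff by blast
  then have "(\<lambda>y. \<Phi> y / y) \<midarrow>0\<rightarrow> 1" using Phi0 by simp
  then obtain s where s: "s > 0" "\<And>y. y \<noteq> 0 \<and> norm (y - 0) < s \<Longrightarrow> norm (\<Phi> y / y - 1) < \<epsilon>"
    using LIM_D[OF _ assms] by blast
  have "norm (\<Phi> u - u) \<le> \<epsilon> * norm u" if "norm u < s" for u
  proof (cases "u = 0")
    case True then show ?thesis using Phi0 by simp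
  next
    case False
    have "\<Phi> u - u = u * (\<Phi> u / u - 1)" using False by (simp add: field_simps)
    then have "norm (\<Phi> u - u) = norm u * norm (\<Phi> u / u - 1)" by (simp add: norm_mult)
    also have "\<dots> \<le> norm u * \<epsilon>" using s(2)[of u] False that by (intro mult_left_mono) auto
    finally show ?thesis by (simp add: mult.commute)
  qed
  then show ?thesis using s(1) by blast
qed

lemma Phi_cnj: "\<Phi> (cnj z) = cnj (\<Phi> z)"
proof -
  define \<Psi> where "\<Psi> = (\<lambda>z. cnj (\<Phi> (cnj z)))"
  have Psi_eq: "\<forall>z. \<Psi> (of_real lam * z) = poly p (\<Psi> z)"
    unfolding \<Psi>_def using Phi_eq poly_cnj_real[OF real_coeffs] by simp
  have Psi_iter: "\<Psi> (of_real lam ^ n * z) = (poly p ^^ n) (\<Psi> z)" for n z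
    using fun_iter[OF Psi_eq] .
  have small: "\<exists>\<delta>>0. \<forall>u. norm u < \<delta> \<longrightarrow> norm (\<Phi> u - u) \<le> \<epsilon> * norm u \<and> norm (\<Psi> u - u) \<le> \<epsilon> * norm u"
    if eps: "\<epsilon> > 0" for \<epsilon>
  proof -
    obtain \<delta> where \<delta>: "\<delta> > 0" "\<And>u. norm u < \<delta> \<Longrightarrow> norm (\<Phi> u - u) \<le> \<epsilon> * norm u"
      using Phi_small[OF eps] by blast
    have "norm (\<Psi> u - u) \<le> \<epsilon> * norm u" if "norm u < \<delta>" for u
    proof -
      have "\<Psi> u - u = cnj (\<Phi> (cnj u) - cnj u)" unfolding \<Psi>_def by simp
      then have "norm (\<Psi> u - u) = norm (\<Phi> (cnj u) - cnj u)" by (metis complex_mod_cnj)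
      also have "\<dots> \<le> \<epsilon> * norm (cnj u)" using \<delta>(2)[of "cnj u"] that by simp
      finally show ?thesis by simp
    qed
    then show ?thesis using \<delta> by blast
  qed
  obtain C where C: "C \<ge> 0" "\<And>a b \<rho>. norm a \<le> \<rho> \<Longrightarrow> norm b \<le> \<rho> \<Longrightarrow> \<rho> \<le> 1 \<Longrightarrow>
     norm (poly p a - poly p b - coeff p 1 * (a - b)) \<le> C * \<rho> * norm (a - b)"
    using poly_diff_bound[OF p0 deg] d2 by auto
  obtain \<delta>1 where \<delta>1: "\<delta>1 > 0" "\<And>u. norm u < \<delta>1 \<Longrightarrow> norm (\<Phi> u - u) \<le> 1 * norm u \<and> norm (\<Psi> u - u) \<le> 1 * norm u"
    using small[of 1] by auto
  define r1 where "r1 = min \<delta>1 (1/2)"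
  have r1: "r1 > 0" "r1 \<le> \<delta>1" "r1 \<le> 1/2" unfolding r1_def using \<delta>1 by auto
  define D where "D = (\<lambda>z. \<Phi> z - \<Psi> z)"
  define K where "K = 2 * C / lam"
  have K0: "K \<ge> 0" unfolding K_def using C lam1 by auto
  have step: "norm (D (of_real lam * u)) \<le> lam * norm (D u) * (1 + K * norm u)" if u: "norm u < r1" for u
  proof -
    have a: "norm (\<Phi> u) \<le> 2 * norm u" using \<delta>1(2)[of u] u r1 norm_triangle_ineq2[of "\<Phi> u" u] by auto
    have b: "norm (\<Psi> u) \<le> 2 * norm u" using \<delta>1(2)[of u] u r1 norm_triangle_ineq2[of "\<Psi> u" u] by auto
    have "2 * norm u \<le> 1" using u r1 by auto
    then have e: "norm (poly p (\<Phi> u) - poly p (\<Psi> u) - of_real lam * D u) \<le> C * (2 * norm u) * norm (D u)"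
      using C(2)[OF a b] p1 unfolding D_def by simp
    have "D (of_real lam * u) = poly p (\<Phi> u) - poly p (\<Psi> u)"
      unfolding D_def using Phi_eq Psi_eq by simp
    then have "norm (D (of_real lam * u)) \<le> norm (of_real lam * D u) + C * (2 * norm u) * norm (D u)"
      using e norm_triangle_ineq2[of "D (of_real lam * u)" "of_real lam * D u"] by simp
    also have "\<dots> = lam * norm (D u) * (1 + K * norm u)"
      unfolding K_def using lam1 by (simp add: norm_mult field_simps)
    finally show ?thesis .
  qed
  have small_zero: "D z = 0" if z: "norm z < r1" for z
  proof -
    define x where "x = (\<lambda>n::nat. z / of_real (lam ^ n))"
    define T where "T = (\<lambda>n::nat. (1 - (1/lam)^n) / (lam - 1))"
    have xn: "norm (x n) = norm z / lam ^ n" for n unfolding x_def using lam1 by (simp add: norm_divide norm_power)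
    have xn_le: "norm (x n) \<le> norm z" for n
      unfolding xn using lam1 by (simp add: divide_le_eq one_le_power mult_le_cancel_left1) 
    have xs: "x n = of_real lam * x (Suc n)" for n unfolding x_def using lam1 by (simp add: field_simps)
    have ind: "norm (D z) \<le> lam ^ n * norm (D (x n)) * exp (K * norm z * T n)" for n
    proof (induction n)
      case 0 then show ?case unfolding x_def T_def by simp
    next
      case (Suc n)
      have "norm (x (Suc n)) < r1" using xn_le[of "Suc n"] z by linarith
      then have "norm (D (x n)) \<le> lam * norm (D (x (Suc n))) * (1 + K * norm (x (Suc n)))"
        using step xs by metis
      also have "\<dots> \<le> lam * norm (D (x (Suc n))) * exp (K * norm (x (Suc n)))"
        using lam1 by (intro mult_left_mono) (auto simp: exp_ge_add_one_self)
      finally have A: "norm (D (x n)) \<le> lam * norm (D (x (Suc n))) * exp (K * norm (x (Suc n)))" .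
      have Tn: "T n + norm (x (Suc n)) / norm z = T (Suc n)" if "z \<noteq> 0"
        unfolding T_def xn using lam1 that by (simp add: field_simps)
      have "norm (D z) \<le> lam ^ n * norm (D (x n)) * exp (K * norm z * T n)" by (rule Suc)
      also have "\<dots> \<le> lam ^ n * (lam * norm (D (x (Suc n))) * exp (K * norm (x (Suc n)))) * exp (K * norm z * T n)"
        using A lam1 by (intro mult_right_mono mult_left_mono) auto
      also have "\<dots> = lam ^ Suc n * norm (D (x (Suc n))) * exp (K * norm z * T (Suc n))"
      proof (cases "z = 0")
        case True then show ?thesis unfolding x_def by simp
      next
        case False
        have "K * norm (x (Suc n)) + K * norm z * T n = K * norm z * T (Suc n)"
          using Tn[OF False, symmetric] False by (simp add: field_simps)
        then show ?thesis by (simp add: exp_add[symmetric] algebra_simps)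
      qed
      finally show ?case .
    qed
    have Tb: "T n \<le> 1 / (lam - 1)" for n
      unfolding T_def using lam1 by (intro divide_right_mono) auto
    define M where "M = exp (K * norm z / (lam - 1))"
    have M: "exp (K * norm z * T n) \<le> M" for n
    proof -
      have "K * norm z * T n \<le> K * norm z * (1 / (lam - 1))"
        using mult_left_mono[OF Tb[of n], of "K * norm z"] K0 by simp
      then show ?thesis unfolding M_def by simp
    qed
    have "norm (D z) \<le> 2 * \<epsilon> * norm z * M" if e: "\<epsilon> > 0" for \<epsilon>
    proof -
      obtain \<delta> where \<delta>: "\<delta> > 0" "\<And>u. norm u < \<delta> \<Longrightarrow> norm (\<Phi> u - u) \<le> \<epsilon> * norm u \<and> norm (\<Psi> u - u) \<le> \<epsilon> * norm u"
        using small[OF e] by blast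
      obtain n where n: "norm z / \<delta> < lam ^ n" using real_arch_pow[OF lam1] by auto
      have "norm (x n) < \<delta>" unfolding xn using n \<delta> lam1 by (simp add: field_simps)
      then have "norm (D (x n)) \<le> 2 * \<epsilon> * norm (x n)"
        using \<delta>(2)[of "x n"] norm_triangle_ineq4[of "\<Phi> (x n) - x n" "\<Psi> (x n) - x n"]
        unfolding D_def by (simp add: norm_minus_commute)
      then have A: "lam ^ n * norm (D (x n)) \<le> 2 * \<epsilon> * norm z"
        unfolding xn using lam1 by (simp add: field_simps)
      have "lam ^ n * norm (D (x n)) * exp (K * norm z * T n) \<le> 2 * \<epsilon> * norm z * M"
        using mult_mono[OF A M[of n]] e by simp
      then show ?thesis using ind[of n] by linarith
    qed
    note bnd = this
    have M0: "M > 0" unfolding M_def by simp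
    have "norm (D z) \<le> 0 + e" if e: "e > 0" for e
    proof -
      define \<epsilon> where "\<epsilon> = e / (2 * norm z * M + 1)"
      have "0 \<le> 2 * norm z * M" using M0 by simp
      then have den: "2 * norm z * M + 1 > 0" by linarith
      have "\<epsilon> > 0" unfolding \<epsilon>_def using e den by simp
      then have "norm (D z) \<le> 2 * \<epsilon> * norm z * M" by (rule bnd)
      also have "2 * \<epsilon> * norm z * M = e * (2 * norm z * M) / (2 * norm z * M + 1)"
        unfolding \<epsilon>_def by (simp add: field_simps)
      also have "\<dots> \<le> e" using den e by (simp add: field_simps)
      finally show ?thesis by simp
    qed
    then have "norm (D z) \<le> 0" by (rule field_le_epsilon)
    then show ?thesis by simp
  qed
  have "\<Phi> z = \<Psi> z" for z
  proof -
    obtain n where n: "norm z / r1 < lam ^ n" using real_arch_pow[OF lam1] by auto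
    have "norm (z / of_real (lam ^ n)) < r1" using n r1 lam1 by (simp add: norm_divide norm_power field_simps)
    then have "\<Phi> (z / of_real (lam ^ n)) = \<Psi> (z / of_real (lam ^ n))" using small_zero unfolding D_def by simp
    moreover have "of_real lam ^ n * (z / of_real (lam ^ n)) = z" using lam1 by simp
    ultimately show ?thesis using Phi_iter[of n "z / of_real (lam ^ n)"] Psi_iter[of n "z / of_real (lam ^ n)"]
      by simp
  qed
  then show ?thesis unfolding \<Psi>_def by (metis complex_cnj_cnj)
qed

end


context ctx begin

lemma poly_real: "poly p (of_real t) \<in> \<real>"
proof -
  have "cnj (poly p (of_real t)) = poly p (of_real t)"
    using poly_cnj_real[OF real_coeffs, of "of_real t"] by simp
  then show ?thesis using Reals_cnj_iff by blast
qed

lemma lead_nz: "lead_coeff p \<noteq> 0"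
  using deg d2 by auto

lemma lead_real: "lead_coeff p = of_real (Re (lead_coeff p))"
  using real_coeffs by (metis Re_complex_of_real Reals_cases)

lemma iter_fix: "poly p u = u \<Longrightarrow> (poly p ^^ n) u = u"
  by (induction n) auto

lemma lead_pos: "Re (lead_coeff p) > 0"
proof (rule ccontr)
  assume neg: "\<not> Re (lead_coeff p) > 0"
  have neg': "Re (lead_coeff p) < 0"
    using neg lead_nz lead_real by (metis linorder_neqE_linordered_idom of_real_0)
  define a where "a = lead_coeff p"
  obtain R0 C where RC: "R0 > 0" "C > 0"
    "\<And>u. R0 \<le> norm u \<Longrightarrow> 2 * norm u \<le> norm (poly p u)"
    "\<And>u. R0 \<le> norm u \<Longrightarrow> norm (poly p u / (lead_coeff p * u ^ d) - 1) \<le> C / norm u"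
    "\<And>u::complex. R0 \<le> norm u \<Longrightarrow> C / norm u \<le> 1/4"
    using poly_infty_est[OF deg d2] by blast
  obtain C' where C': "C' \<ge> 0" "\<And>a b \<rho>. norm a \<le> \<rho> \<Longrightarrow> norm b \<le> \<rho> \<Longrightarrow> \<rho> \<le> 1 \<Longrightarrow>
     norm (poly p a - poly p b - coeff p 1 * (a - b)) \<le> C' * \<rho> * norm (a - b)"
    using poly_diff_bound[OF p0 deg] d2 by auto
  define f where "f = (\<lambda>t. Re (poly p (of_real t)) - t)"
  have fc: "continuous_on UNIV f" unfolding f_def
    by (intro continuous_intros continuous_on_compose2[OF holomorphic_on_imp_continuous_on[OF poly_holo[of p UNIV]]]) auto
  define t1 where "t1 = min (1/2) ((lam - 1) / (2 * C' + 2))"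
  have t1: "t1 > 0" "t1 \<le> 1/2" "C' * t1 \<le> (lam - 1) / 2"
  proof -
    show "t1 > 0" unfolding t1_def using lam1 C' by auto
    show "t1 \<le> 1/2" unfolding t1_def using min.cobounded1[of "1/2::real" "(lam - 1) / (2 * C' + 2)"] by linarith
    have "t1 \<le> (lam - 1) / (2 * C' + 2)" unfolding t1_def using min.cobounded2[of "1/2::real" "(lam - 1) / (2 * C' + 2)"] by linarith
    then have "C' * t1 \<le> C' * ((lam - 1) / (2 * C' + 2))" using C' by (intro mult_left_mono) auto
    also have "\<dots> \<le> (lam - 1) / 2" using C' lam1 by (simp add: field_simps)
    finally show "C' * t1 \<le> (lam - 1) / 2" .
  qed
  have f1: "f t1 \<ge> 0"
  proof -
    have "norm (poly p (of_real t1) - poly p 0 - coeff p 1 * (of_real t1 - 0)) \<le> C' * t1 * norm (of_real t1 - 0 :: complex)"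
      using C'(2)[of "of_real t1" t1 0] t1 by auto
    then have e: "norm (poly p (of_real t1) - of_real (lam * t1)) \<le> C' * t1 * t1"
      using p1 t1 p0 by (simp add: poly_0_coeff_0)
    have "lam * t1 - Re (poly p (of_real t1)) \<le> norm (poly p (of_real t1) - of_real (lam * t1))"
      using abs_Re_le_cmod[of "poly p (of_real t1) - of_real (lam * t1)"] by simp
    then have "Re (poly p (of_real t1)) \<ge> lam * t1 - C' * t1 * t1" using e by linarith
    moreover have "C' * t1 * t1 \<le> (lam - 1) / 2 * t1" using t1 by (intro mult_right_mono) auto
    ultimately have "Re (poly p (of_real t1)) \<ge> t1 * (lam + 1) / 2" by (simp add: field_simps)
    moreover have "t1 * (lam + 1) / 2 \<ge> t1" using t1 lam1 by (simp add: field_simps)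
    ultimately show ?thesis unfolding f_def by linarith
  qed
  define t2 where "t2 = max R0 (t1 + 1)"
  have t2: "t2 \<ge> t1" "t2 \<ge> R0" "t2 > 0" unfolding t2_def using RC t1 by auto
  have f2: "f t2 \<le> 0"
  proof -
    define u where "u = (of_real t2 :: complex)"
    have nu: "norm u = t2" unfolding u_def using t2 by simp
    define q where "q = poly p u / (lead_coeff p * u ^ d)"
    have Ru: "R0 \<le> norm u" using nu t2 by simp
    have q1: "norm (q - 1) \<le> 1/4" unfolding q_def using RC(4)[OF Ru] RC(5)[OF Ru] by linarith
    have qR: "q \<in> \<real>" unfolding q_def u_def
      by (metis Reals_divide Reals_mult Reals_of_real Reals_power lead_real poly_real)
    have "Re q \<ge> 3/4"
    proof -
      have "\<bar>Re q - 1\<bar> \<le> 1/4" using q1 abs_Re_le_cmod[of "q - 1"] by simp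
      then show ?thesis by linarith
    qed
    have u0: "u \<noteq> 0" using nu t2 by auto
    have pu: "poly p u = lead_coeff p * u ^ d * q" unfolding q_def using u0 lead_nz by simp
    obtain qr where qr: "q = of_real qr" using qR Reals_cases by blast
    obtain ar where ar: "lead_coeff p = of_real ar" "ar = Re (lead_coeff p)"
      using lead_real by blast
    have "poly p u = of_real (ar * t2 ^ d * qr)" using pu unfolding u_def qr ar(1) by simp
    then have "Re (poly p u) = ar * t2 ^ d * qr" by simp
    then have "Re (poly p u) = Re (lead_coeff p) * t2 ^ d * Re q" using ar(2) qr by simp
    also have "\<dots> < 0" using neg' t2 \<open>Re q \<ge> 3/4\<close>
      by (simp add: mult_neg_pos)
    finally show ?thesis unfolding f_def u_def using t2 by simp
  qed
  obtain x where x: "t1 \<le> x" "x \<le> t2" "f x = 0"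
    using IVT2'[of f t2 0 t1] f1 f2 t2 continuous_on_subset[OF fc] by auto
  define u where "u = (of_real x :: complex)"
  have xpos: "x > 0" using x(1) t1(1) by linarith
  have u0: "u \<noteq> 0" "norm u = x" using xpos unfolding u_def by auto
  have hfix: "poly p u = u"
  proof -
    have "Re (poly p u) = x" using x unfolding f_def u_def by simp
    moreover have "Im (poly p u) = 0" unfolding u_def using poly_real complex_is_Real_iff by blast
    ultimately show ?thesis unfolding u_def by (simp add: complex_eq_iff)
  qed
  have "u \<in> angular_region \<beta>" unfolding angular_region_def u_def using xpos beta0 by auto
  then have "u \<in> fatou_inf p" using betaF by auto
  then obtain n where "R0 < norm ((poly p ^^ n) u)" using fatou_inf_escape[OF RC(3) RC(1)] by blast
  then have "R0 < norm u" using iter_fix[OF hfix] by simp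
  then have "2 * norm u \<le> norm u" using RC(3)[of u] hfix by simp
  then show False using u0 xpos by simp
qed

end


context ctx begin

definition ll where "ll = ln lam"
definition psi where "psi w = \<Phi> (exp (w * of_real ll))"
definition cc where "cc = root (d - 1) (Re (lead_coeff p))"
definition Sb where "Sb = {w. \<bar>Im w\<bar> < \<beta> / ll}"

lemma ll_pos: "ll > 0" unfolding ll_def using lam1 by simp

lemma exp_ll_nat: "exp (of_nat n * of_real ll) = (of_real lam ^ n :: complex)"
proof -
  have "exp (of_nat n * of_real ll) = exp (of_real ll :: complex) ^ n" by (rule exp_of_nat_mult)
  also have "exp (of_real ll :: complex) = of_real lam" unfolding ll_def using lam1 by (simp add: exp_of_real)
  finally show ?thesis .
qed

lemma psi_shift: "psi (w + of_nat n) = (poly p ^^ n) (psi w)"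
proof -
  have "(w + of_nat n) * of_real ll = w * of_real ll + of_nat n * of_real ll" by (simp add: distrib_right)
  then have "exp ((w + of_nat n) * of_real ll) = exp (w * of_real ll) * exp (of_nat n * of_real ll)"
    by (simp add: exp_add)
  then have "exp ((w + of_nat n) * of_real ll) = of_real lam ^ n * exp (w * of_real ll)"
    using exp_ll_nat[of n] by (simp add: mult.commute)
  then show ?thesis unfolding psi_def using Phi_iter by simp
qed

lemma psi_succ: "psi (w + 1) = poly p (psi w)"
  using psi_shift[of w 1] by simp

lemma psi_holo: "psi holomorphic_on S"
proof -
  have "(\<Phi> \<circ> (\<lambda>w. exp (w * of_real ll))) holomorphic_on S"
    by (intro holomorphic_on_compose holomorphic_intros Phi_entire)
  then show ?thesis unfolding psi_def o_def by simp
qed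

lemma psi_cont: "continuous_on S psi"
  by (rule holomorphic_on_imp_continuous_on[OF psi_holo])

lemma psi_cnj: "psi (cnj w) = cnj (psi w)"
proof -
  have "exp (cnj w * of_real ll) = cnj (exp (w * of_real ll))" by (simp add: exp_cnj)
  then show ?thesis unfolding psi_def by (simp add: Phi_cnj)
qed

lemma cc_pos: "cc > 0" unfolding cc_def using lead_pos d2 by simp

lemma cc_pow: "(of_real cc :: complex) ^ (d - 1) = lead_coeff p"
proof -
  have "cc ^ (d - 1) = Re (lead_coeff p)" unfolding cc_def using lead_pos d2
    by (simp add: real_root_pow_pos2)
  then show ?thesis using lead_real by (metis of_real_power)
qed

lemma cc_pow_d: "(of_real cc :: complex) * lead_coeff p = of_real cc ^ d"
proof -
  have "d = Suc (d - 1)" using d2 by simp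
  then have "(of_real cc :: complex) ^ d = of_real cc * of_real cc ^ (d - 1)" by (metis power_Suc)
  then show ?thesis using cc_pow by simp
qed

lemma Sb_open: "open Sb"
proof -
  have "Sb = {w. Im w < \<beta> / ll} \<inter> {w. Im w > - (\<beta> / ll)}" unfolding Sb_def by auto
  then show ?thesis by (simp add: open_Int open_halfspace_Im_lt open_halfspace_Im_gt)
qed

lemma Sb_convex: "convex Sb"
proof -
  have "Sb = {w. Im w < \<beta> / ll} \<inter> {w. Im w > - (\<beta> / ll)}" unfolding Sb_def by auto
  then show ?thesis by (simp add: convex_Int convex_halfspace_Im_lt convex_halfspace_Im_gt)
qed

lemma Sb_shift: "w \<in> Sb \<Longrightarrow> w + of_nat n \<in> Sb" "w \<in> Sb \<Longrightarrow> w - of_nat n \<in> Sb"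
  "w \<in> Sb \<Longrightarrow> w + 1 \<in> Sb"
  unfolding Sb_def by auto

lemma Sb_real: "of_real x \<in> Sb" unfolding Sb_def using beta0 ll_pos by simp

lemma Sb_cnj: "w \<in> Sb \<Longrightarrow> cnj w \<in> Sb" unfolding Sb_def by simp

end

locale ctx2 = ctx +
  fixes R C :: real
  assumes R0: "R > 0" and C0: "C > 0"
    and grow: "\<And>u. R \<le> norm u \<Longrightarrow> 2 * norm u \<le> norm (poly p u)"
    and qest: "\<And>u. R \<le> norm u \<Longrightarrow> norm (poly p u / (lead_coeff p * u ^ d) - 1) \<le> C / norm u"
    and RC: "8 * C \<le> R"
    and Rc: "2 \<le> ln (cc * R)"
begin

lemma lemmaA:
  assumes eta: "0 < \<eta>" "\<eta> < \<beta>"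
  shows "\<exists>N. \<forall>w. \<bar>Im w\<bar> \<le> \<eta> / ll \<and> N \<le> Re w \<longrightarrow> R < norm (psi w)"
proof -
  have "isCont Arg 1" by (rule continuous_at_Arg) auto
  then obtain e where e: "e > 0" "\<And>q. dist q 1 < e \<Longrightarrow> dist (Arg q) (Arg 1) < \<beta> - \<eta>"
    unfolding continuous_at_eps_delta using eta by (metis diff_gt_0_iff_gt)
  define e' where "e' = min (e / 2) (1 / 2)"
  have e': "e' > 0" "e' < e" "e' \<le> 1/2" unfolding e'_def using e by auto
  obtain \<delta> where \<delta>: "\<delta> > 0" "\<And>u. norm u < \<delta> \<Longrightarrow> norm (\<Phi> u - u) \<le> e' * norm u"
    using Phi_small[OF e'(1)] by blast
  have sect: "\<Phi> u \<in> angular_region \<beta>" if u: "u \<noteq> 0" "norm u < \<delta>" "\<bar>Arg u\<bar> \<le> \<eta>" for u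
  proof -
    define q where "q = \<Phi> u / u"
    have "\<Phi> u - u = u * (q - 1)" unfolding q_def using u by (simp add: field_simps)
    then have "norm u * norm (q - 1) \<le> e' * norm u" using \<delta>(2)[OF u(2)] by (simp add: norm_mult)
    then have q1: "norm (q - 1) \<le> e'" using u by simp
    then have "dist q 1 < e" using e' by (simp add: dist_norm)
    then have "\<bar>Arg q\<bar> < \<beta> - \<eta>" using e(2) by (simp add: dist_real_def)
    have q0: "q \<noteq> 0" using q1 e' by auto
    have Pu: "\<Phi> u = u * q" unfolding q_def using u by simp
    then have "\<Phi> u \<noteq> 0" using u q0 by simp
    moreover have "\<bar>Arg (\<Phi> u)\<bar> < \<beta>"
      using Arg_mult_le[OF u(1) q0] Pu u(3) \<open>\<bar>Arg q\<bar> < \<beta> - \<eta>\<close> by simp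
    ultimately show ?thesis unfolding angular_region_def by simp
  qed
  obtain T :: nat where T: "1 / \<delta> < lam ^ T" using real_arch_pow[OF lam1] by auto
  define K0 where "K0 = {w. Im w \<le> \<eta> / ll} \<inter> {w. Im w \<ge> - (\<eta> / ll)} \<inter> {w. Re w \<le> - real T} \<inter> {w. Re w \<ge> - real T - 1}"
  have K0c: "compact K0"
  proof -
    have "closed K0" unfolding K0_def
      by (intro closed_Int closed_halfspace_Im_le closed_halfspace_Im_ge closed_halfspace_Re_le closed_halfspace_Re_ge)
    moreover have "bounded K0"
    proof -
      have "K0 \<subseteq> cball 0 (\<eta> / ll + real T + 1)"
      proof
        fix w assume "w \<in> K0"
        then have "\<bar>Im w\<bar> \<le> \<eta> / ll" "\<bar>Re w\<bar> \<le> real T + 1" unfolding K0_def by auto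
        then have "norm w \<le> \<eta> / ll + (real T + 1)" using cmod_le[of w] by linarith
        then show "w \<in> cball 0 (\<eta> / ll + real T + 1)" by simp
      qed
      then show ?thesis using bounded_cball bounded_subset by blast
    qed
    ultimately show ?thesis using compact_eq_bounded_closed by blast
  qed
  have K0img: "psi ` K0 \<subseteq> fatou_inf p"
  proof
    fix v assume "v \<in> psi ` K0"
    then obtain w where w: "w \<in> K0" "v = psi w" by auto
    define u where "u = exp (w * of_real ll)"
    have u0: "u \<noteq> 0" unfolding u_def by simp
    have "norm u = exp (Re w * ll)" unfolding u_def by simp
    also have "\<dots> \<le> exp (- real T * ll)"
    proof -
      have "Re w \<le> - real T" using w(1) unfolding K0_def by auto
      then have "Re w * ll \<le> - real T * ll" by (rule mult_right_mono) (use ll_pos in auto)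
      then show ?thesis by simp
    qed
    also have "\<dots> = 1 / lam ^ T"
    proof -
      have "exp (real T * ln lam) = exp (ln lam) ^ T" by (rule exp_of_nat_mult)
      also have "\<dots> = lam ^ T" using lam1 by simp
      finally have "exp (real T * ll) = lam ^ T" unfolding ll_def .
      then show ?thesis by (simp add: exp_minus field_simps)
    qed
    also have "\<dots> < \<delta>" using T \<delta> lam1 by (simp add: field_simps)
    finally have un: "norm u < \<delta>" .
    have "\<bar>Arg u\<bar> \<le> \<bar>Im (w * of_real ll)\<bar>" unfolding u_def by (rule Arg_exp_le)
    also have "\<dots> = \<bar>Im w\<bar> * ll" using ll_pos by (simp add: abs_mult)
    also have "\<dots> \<le> \<eta>"
    proof -
      have h: "Im w * ll \<le> \<eta>" "- \<eta> \<le> Im w * ll" using w(1) ll_pos unfolding K0_def by (auto simp: field_simps)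
      then have "\<bar>Im w * ll\<bar> \<le> \<eta>" by linarith
      then show ?thesis using ll_pos by (simp add: abs_mult)
    qed
    finally have "\<bar>Arg u\<bar> \<le> \<eta>" .
    then have "\<Phi> u \<in> angular_region \<beta>" using sect u0 un by blast
    then show "v \<in> fatou_inf p" using betaF w unfolding psi_def u_def by auto
  qed
  have "compact (psi ` K0)" by (rule compact_continuous_image[OF psi_cont K0c])
  then obtain N0 where N0: "\<And>n x. n \<ge> N0 \<Longrightarrow> x \<in> psi ` K0 \<Longrightarrow> R < norm ((poly p ^^ n) x)"
    using compact_escape[OF grow R0 _ K0img] by blast
  have "\<forall>w. \<bar>Im w\<bar> \<le> \<eta> / ll \<and> real N0 - real T \<le> Re w \<longrightarrow> R < norm (psi w)"
  proof (intro allI impI)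
    fix w assume w: "\<bar>Im w\<bar> \<le> \<eta> / ll \<and> real N0 - real T \<le> Re w"
    define n where "n = nat \<lceil>Re w + real T\<rceil>"
    have n1: "real n \<ge> Re w + real T" unfolding n_def by linarith
    have n2: "real n < Re w + real T + 1" unfolding n_def using w by linarith
    have nN: "n \<ge> N0" unfolding n_def using w by linarith
    define w' where "w' = w - of_nat n"
    have "w' \<in> K0" unfolding K0_def w'_def using w n1 n2 by auto
    moreover have "psi w = (poly p ^^ n) (psi w')" unfolding w'_def using psi_shift[of "w - of_nat n" n] by simp
    ultimately show "R < norm (psi w)" using N0[OF nN] by auto
  qed
  then show ?thesis by blast
qed

end


lemma exp1_zero:
  fixes f :: "complex \<Rightarrow> complex"
  assumes S: "connected S" and cf: "continuous_on S f" and e1: "\<And>x. x \<in> S \<Longrightarrow> exp (f x) = 1"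
    and x0: "x0 \<in> S" "f x0 = 0"
  shows "\<And>x. x \<in> S \<Longrightarrow> f x = 0"
proof -
  have "f constant_on S"
  proof (rule continuous_discrete_range_constant[OF S cf])
    fix x assume x: "x \<in> S"
    have "2 * pi \<le> norm (f y - f x)" if y: "y \<in> S" "f y \<noteq> f x" for y
    proof -
      have "exp (f y - f x) = 1" using e1[OF x] e1[OF y(1)] by (simp add: exp_diff)
      then obtain n :: int where n: "Re (f y - f x) = 0" "Im (f y - f x) = of_int (2 * n) * pi"
        using exp_eq_1 by blast
      have "n \<noteq> 0"
      proof
        assume "n = 0"
        then have "f y - f x = 0" using n by (simp add: complex_eq_iff)
        then show False using y(2) by simp
      qed
      then have "1 \<le> \<bar>real_of_int n\<bar>" by linarith
      have "norm (f y - f x) \<ge> \<bar>Im (f y - f x)\<bar>" by (rule abs_Im_le_cmod)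
      moreover have "\<bar>Im (f y - f x)\<bar> = 2 * pi * \<bar>real_of_int n\<bar>" using n(2) by (simp add: abs_mult)
      moreover have "2 * pi * 1 \<le> 2 * pi * \<bar>real_of_int n\<bar>" using \<open>1 \<le> \<bar>real_of_int n\<bar>\<close> by (intro mult_left_mono) auto
      ultimately show ?thesis by linarith
    qed
    then show "\<exists>e>0. \<forall>y. y \<in> S \<and> f y \<noteq> f x \<longrightarrow> e \<le> norm (f y - f x)"
      by (intro exI[of _ "2 * pi"]) auto
  qed
  then show "\<And>x. x \<in> S \<Longrightarrow> f x = 0" using x0 unfolding constant_on_def by metis
qed

context ctx2 begin

lemma psi_zero: "(poly p ^^ n) 0 = 0"
  using iter_fix[of 0 n] p0 by (simp add: poly_0_coeff_0)

lemma psi_nz: assumes w: "w \<in> Sb" shows "psi w \<noteq> 0"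
proof
  assume z: "psi w = 0"
  define \<eta> where "\<eta> = (\<bar>Im w\<bar> * ll + \<beta>) / 2"
  have wS: "\<bar>Im w\<bar> * ll < \<beta>" using w ll_pos unfolding Sb_def by (simp add: field_simps)
  have eta: "0 < \<eta>" "\<eta> < \<beta>" unfolding \<eta>_def using wS beta0 ll_pos by (auto intro: add_nonneg_pos)
  have aux: "\<And>X::real. X < \<beta> \<Longrightarrow> X \<le> (X + \<beta>) / 2" by (simp add: field_simps)
  have "\<bar>Im w\<bar> * ll \<le> \<eta>" unfolding \<eta>_def by (rule aux[OF wS])
  then have imw: "\<bar>Im w\<bar> \<le> \<eta> / ll" using ll_pos by (simp add: field_simps)
  obtain N where N: "\<And>w. \<bar>Im w\<bar> \<le> \<eta> / ll \<and> N \<le> Re w \<Longrightarrow> R < norm (psi w)" using lemmaA[OF eta] by blast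
  define n where "n = nat \<lceil>N - Re w\<rceil>"
  have "real n \<ge> N - Re w" unfolding n_def by (simp add: real_nat_ceiling_ge)
  then have "N \<le> Re (w + of_nat n)" by simp
  then have "R < norm (psi (w + of_nat n))" using N imw by simp
  moreover have "psi (w + of_nat n) = 0" using psi_shift z psi_zero by simp
  ultimately show False using R0 by simp
qed

lemma psi_real: "psi (of_real x) \<in> \<real>"
  using psi_cnj[of "of_real x"] Reals_cnj_iff by force

lemma base_point: "\<exists>x0::real. Re (psi (of_real x0)) > 0"
proof -
  obtain \<delta> where \<delta>: "\<delta> > 0" "\<And>u. norm u < \<delta> \<Longrightarrow> norm (\<Phi> u - u) \<le> 1/2 * norm u"
    using Phi_small[of "1/2"] by auto
  obtain T :: nat where T: "1 / \<delta> < lam ^ T" using real_arch_pow[OF lam1] by auto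
  define t where "t = exp (- real T * ll)"
  have et: "exp (real T * ll) = lam ^ T"
  proof -
    have "exp (real T * ln lam) = exp (ln lam) ^ T" by (rule exp_of_nat_mult)
    also have "\<dots> = lam ^ T" using lam1 by simp
    finally show ?thesis unfolding ll_def .
  qed
  have t: "t > 0" "t < \<delta>"
  proof -
    show "t > 0" unfolding t_def by simp
    have "t = 1 / lam ^ T" unfolding t_def using et by (simp add: exp_minus field_simps)
    have lT: "lam ^ T > 0" using lam1 by simp
    have "1 < \<delta> * lam ^ T" using T \<delta> by (simp add: field_simps)
    then have "1 / lam ^ T < \<delta>" using lT by (simp add: divide_less_eq)
    then show "t < \<delta>" using \<open>t = 1 / lam ^ T\<close> by simp
  qed
  have u: "exp (of_real (- real T) * of_real ll) = (of_real t :: complex)"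
    unfolding t_def by (simp add: exp_of_real[symmetric])
  have "norm (\<Phi> (of_real t) - of_real t) \<le> 1/2 * t" using \<delta>(2)[of "of_real t"] t by simp
  then have "t - Re (\<Phi> (of_real t)) \<le> 1/2 * t"
    using abs_Re_le_cmod[of "\<Phi> (of_real t) - of_real t"] by simp
  then have "Re (\<Phi> (of_real t)) > 0" using t by linarith
  then show ?thesis unfolding psi_def using u by (intro exI[of _ "- real T"]) simp
qed

lemma L_exists: "\<exists>L. L holomorphic_on Sb \<and> (\<forall>w\<in>Sb. exp (L w) = of_real cc * psi w) \<and> (\<forall>x. L (of_real x) \<in> \<real>)"
proof -
  have hol: "(\<lambda>w. of_real cc * psi w) holomorphic_on Sb" by (intro holomorphic_intros psi_holo)
  have nz: "\<And>w. w \<in> Sb \<Longrightarrow> of_real cc * psi w \<noteq> 0" using psi_nz cc_pos by simp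
  obtain g where g: "g holomorphic_on Sb" "\<And>w. w \<in> Sb \<Longrightarrow> of_real cc * psi w = exp (g w)"
    using contractible_imp_holomorphic_log[OF hol convex_imp_contractible[OF Sb_convex] nz] by blast
  obtain x0 :: real where x0: "Re (psi (of_real x0)) > 0" using base_point by blast
  define c0 where "c0 = cc * Re (psi (of_real x0))"
  have c0: "c0 > 0" unfolding c0_def using cc_pos x0 by simp
  have psix0: "psi (of_real x0) = of_real (Re (psi (of_real x0)))"
    using psi_real[of x0] by (simp add: complex_eq_iff complex_is_Real_iff)
  have x0S: "of_real x0 \<in> Sb" by (rule Sb_real)
  have gx0: "exp (g (of_real x0)) = of_real c0" using g(2)[OF x0S] psix0 unfolding c0_def by simp
  define L where "L = (\<lambda>w. g w - g (of_real x0) + of_real (ln c0))"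
  have Lh: "L holomorphic_on Sb" unfolding L_def by (intro holomorphic_intros g(1))
  have Le: "exp (L w) = of_real cc * psi w" if "w \<in> Sb" for w
  proof -
    have "exp (L w) = exp (g w) / exp (g (of_real x0)) * exp (of_real (ln c0))"
      unfolding L_def by (simp add: exp_add exp_diff)
    also have "\<dots> = exp (g w)" using gx0 c0 by (simp add: exp_of_real)
    finally show ?thesis using g(2)[OF that] by simp
  qed
  have Lx0: "L (of_real x0) = of_real (ln c0)" unfolding L_def by simp
  have Lc: "continuous_on Sb L" by (rule holomorphic_on_imp_continuous_on[OF Lh])
  define f where "f = (\<lambda>w. cnj (L (cnj w)) - L w)"
  have fc: "continuous_on Sb f"
  proof -
    have "continuous_on Sb (\<lambda>w. L (cnj w))"
      by (rule continuous_on_compose2[OF Lc]) (auto intro!: continuous_intros simp: Sb_cnj)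
    then show ?thesis unfolding f_def by (intro continuous_intros Lc)
  qed
  have fe: "exp (f w) = 1" if w: "w \<in> Sb" for w
  proof -
    have "exp (cnj (L (cnj w))) = cnj (exp (L (cnj w)))" by (simp add: exp_cnj)
    also have "\<dots> = cnj (of_real cc * psi (cnj w))" using Le[OF Sb_cnj[OF w]] by simp
    also have "\<dots> = of_real cc * psi w" using psi_cnj[of "cnj w"] by simp
    finally have "exp (cnj (L (cnj w))) = exp (L w)" using Le[OF w] by simp
    then show ?thesis unfolding f_def using exp_not_eq_zero by (simp add: exp_diff)
  qed
  have f0: "f (of_real x0) = 0" unfolding f_def using Lx0 by simp
  have fz: "\<And>w. w \<in> Sb \<Longrightarrow> f w = 0"
    using exp1_zero[OF convex_connected[OF Sb_convex] fc fe x0S f0] by blast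
  have Lr: "L (of_real x) \<in> \<real>" for x
  proof -
    have "f (of_real x) = 0" using fz[OF Sb_real] by simp
    then have "cnj (L (of_real x)) = L (of_real x)" unfolding f_def by simp
    then show ?thesis using Reals_cnj_iff by blast
  qed
  show ?thesis using Lh Le Lr by blast
qed

end

locale ctx3 = ctx2 +
  fixes L :: "complex \<Rightarrow> complex"
  assumes L_holo: "L holomorphic_on Sb"
    and L_exp: "\<And>w. w \<in> Sb \<Longrightarrow> exp (L w) = of_real cc * psi w"
    and L_real: "\<And>x. L (of_real x) \<in> \<real>"



context ctx3 begin

definition G where "G u = Ln (poly p u / (lead_coeff p * u ^ d))"

lemma q_close:
  assumes u: "R \<le> norm u"
  shows "norm (poly p u / (lead_coeff p * u ^ d) - 1) \<le> 1/8"
proof -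
  have un: "norm u > 0" using u R0 by linarith
  have "C / norm u \<le> C / R" by (rule divide_left_mono) (use u C0 un R0 in auto)
  also have "\<dots> \<le> 1/8" using RC R0 by (simp add: field_simps)
  finally show ?thesis using qest[OF u] by linarith
qed

lemma G_props:
  assumes u: "R \<le> norm u"
  shows "exp (G u) = poly p u / (lead_coeff p * u ^ d)" "norm (G u) \<le> 2 * C / norm u"
    "poly p u / (lead_coeff p * u ^ d) \<notin> \<real>\<^sub>\<le>\<^sub>0"
proof -
  define q where "q = poly p u / (lead_coeff p * u ^ d)"
  have q1: "norm (q - 1) \<le> 1/8" unfolding q_def by (rule q_close[OF u])
  have "\<bar>Re q - 1\<bar> \<le> 1/8" using q1 abs_Re_le_cmod[of "q - 1"] by simp
  then have Req: "Re q > 0" by linarith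
  then have q0: "q \<noteq> 0" by auto
  show "exp (G u) = poly p u / (lead_coeff p * u ^ d)" unfolding G_def using q0 q_def by simp
  have "norm (Ln (1 + (q - 1))) \<le> 2 * norm (q - 1)" using q1 by (intro norm_Ln_le) auto
  also have "norm (q - 1) \<le> C / norm u" unfolding q_def by (rule qest[OF u])
  finally show "norm (G u) \<le> 2 * C / norm u" unfolding G_def q_def by simp
  show "poly p u / (lead_coeff p * u ^ d) \<notin> \<real>\<^sub>\<le>\<^sub>0" using Req unfolding q_def complex_nonpos_Reals_iff by simp
qed

lemma G_real:
  assumes t: "R \<le> t"
  shows "G (of_real t) \<in> \<real>"
proof -
  define q where "q = poly p (of_real t) / (lead_coeff p * of_real t ^ d)"
  have t0: "R \<le> norm (of_real t :: complex)" using t R0 by simp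
  have qR: "q \<in> \<real>" unfolding q_def
    by (metis Reals_divide Reals_mult Reals_of_real Reals_power lead_real poly_real)
  have "norm (q - 1) \<le> 1/8" unfolding q_def by (rule q_close[OF t0])
  then have "\<bar>Re q - 1\<bar> \<le> 1/8" using abs_Re_le_cmod[of "q - 1"] by simp
  then have Req: "Re q > 0" by linarith
  have "q = of_real (Re q)" using qR by (simp add: complex_eq_iff complex_is_Real_iff)
  then have "G (of_real t) = of_real (ln (Re q))" unfolding G_def q_def[symmetric]
    using Ln_of_real[OF Req] by metis
  then show ?thesis by simp
qed

definition good where
  "good w \<longleftrightarrow> w \<in> Sb \<and> (\<forall>k::nat. R < norm (psi (w + of_nat k)) \<and>
      L (w + of_nat k + 1) = of_nat d * L (w + of_nat k) + G (psi (w + of_nat k)))"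

lemma relation:
  assumes eta: "0 < \<eta>" "\<eta> < \<beta>"
  shows "\<exists>N. \<forall>w. \<bar>Im w\<bar> < \<eta> / ll \<and> N < Re w \<longrightarrow> good w"
proof -
  obtain N where N: "\<And>w. \<bar>Im w\<bar> \<le> \<eta> / ll \<and> N \<le> Re w \<Longrightarrow> R < norm (psi w)"
    using lemmaA[OF eta] by blast
  define H where "H = {w. Im w < \<eta> / ll} \<inter> {w. Im w > - (\<eta> / ll)} \<inter> {w. Re w > N}"
  have Hm: "w \<in> H \<longleftrightarrow> \<bar>Im w\<bar> < \<eta> / ll \<and> N < Re w" for w unfolding H_def by auto
  have HS: "H \<subseteq> Sb"
  proof
    fix w assume "w \<in> H"
    then have "\<bar>Im w\<bar> < \<eta> / ll" using Hm by auto
    also have "\<eta> / ll < \<beta> / ll" using eta ll_pos by (simp add: divide_strict_right_mono)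
    finally show "w \<in> Sb" unfolding Sb_def by simp
  qed
  have Hpsi: "w \<in> H \<Longrightarrow> R < norm (psi w)" for w using N Hm by force
  have Hsh: "w \<in> H \<Longrightarrow> w + of_nat k \<in> H" for w k using Hm by auto
  have Hconv: "convex H" unfolding H_def
    by (intro convex_Int convex_halfspace_Im_lt convex_halfspace_Im_gt convex_halfspace_Re_gt)
  define q where "q = (\<lambda>w. poly p (psi w) / (lead_coeff p * psi w ^ d))"
  define f where "f = (\<lambda>w. L (w + 1) - of_nat d * L w - G (psi w))"
  have Lc: "continuous_on Sb L" by (rule holomorphic_on_imp_continuous_on[OF L_holo])
  have fc: "continuous_on H f"
  proof -
    have c1: "continuous_on H (\<lambda>w. L (w + 1))"
      by (rule continuous_on_compose2[OF Lc]) (auto intro!: continuous_intros dest: HS[THEN subsetD] simp: Sb_shift)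
    have c2: "continuous_on H L" by (rule continuous_on_subset[OF Lc HS])
    have ph: "(\<lambda>w. poly p (psi w)) holomorphic_on H"
      using holomorphic_on_compose[OF psi_holo poly_holo] by (simp add: o_def)
    have qh: "q holomorphic_on H" unfolding q_def
      using psi_nz HS lead_nz by (intro holomorphic_intros ph psi_holo) auto
    have "(\<lambda>w. Ln (q w)) holomorphic_on H"
      by (rule holomorphic_on_Ln'[OF _ qh]) (use G_props(3) Hpsi in \<open>force simp: q_def\<close>)
    then have c3: "continuous_on H (\<lambda>w. G (psi w))" unfolding G_def q_def
      by (rule holomorphic_on_imp_continuous_on)
    show ?thesis unfolding f_def by (intro continuous_intros c1 c2 c3)
  qed
  have fe: "exp (f w) = 1" if w: "w \<in> H" for w
  proof -
    have wS: "w \<in> Sb" "w + 1 \<in> Sb" using HS w Sb_shift by auto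
    have Rw: "R \<le> norm (psi w)" using Hpsi[OF w] by simp
    have P0: "poly p (psi w) \<noteq> 0" using grow[OF Rw] R0 Rw by auto
    have ps0: "psi w \<noteq> 0" using psi_nz wS by auto
    have "exp (f w) = exp (L (w + 1)) / (exp (L w) ^ d * exp (G (psi w)))"
      unfolding f_def by (simp add: exp_diff exp_of_nat_mult)
    also have "\<dots> = of_real cc * poly p (psi w) /
        ((of_real cc * psi w) ^ d * (poly p (psi w) / (lead_coeff p * psi w ^ d)))"
      using L_exp[OF wS(1)] L_exp[OF wS(2)] G_props(1)[OF Rw] psi_succ by simp
    also have "\<dots> = of_real cc * lead_coeff p / of_real cc ^ d"
      using P0 ps0 cc_pos lead_nz by (simp add: field_simps power_mult_distrib)
    also have "\<dots> = 1" using cc_pow_d cc_pos by simp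
    finally show ?thesis .
  qed
  define x where "x = N + 1"
  have xH: "of_real x \<in> H" using Hm eta ll_pos unfolding x_def by simp
  have fx: "f (of_real x) = 0"
  proof -
    have xS: "of_real x \<in> Sb" by (rule Sb_real)
    have Lx: "L (of_real x) \<in> \<real>" "L (of_real x + 1) \<in> \<real>" using L_real[of x] L_real[of "x + 1"] by auto
    obtain lx where lx: "L (of_real x) = of_real lx" using Lx(1) Reals_cases by blast
    have "of_real cc * psi (of_real x) = of_real (exp lx)" using L_exp[OF xS] lx by (simp add: exp_of_real)
    then have px: "psi (of_real x) = of_real (exp lx / cc)" using cc_pos by (simp add: field_simps)
    have "R < norm (psi (of_real x))" using Hpsi[OF xH] .
    moreover have "norm (psi (of_real x)) = exp lx / cc" using px cc_pos by (simp add: norm_divide)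
    ultimately have Rt: "R \<le> exp lx / cc" by simp
    have "G (psi (of_real x)) \<in> \<real>" using G_real[OF Rt] px by simp
    then have fR: "f (of_real x) \<in> \<real>" unfolding f_def using Lx by (auto intro: Reals_diff Reals_mult)
    obtain n :: int where "Re (f (of_real x)) = 0" "Im (f (of_real x)) = of_int (2 * n) * pi"
      using fe[OF xH] exp_eq_1 by blast
    then show ?thesis using fR by (simp add: complex_eq_iff complex_is_Real_iff)
  qed
  have fz: "\<And>w. w \<in> H \<Longrightarrow> f w = 0"
    using exp1_zero[OF convex_connected[OF Hconv] fc fe xH fx] by blast
  have "good w" if w: "\<bar>Im w\<bar> < \<eta> / ll \<and> N < Re w" for w
  proof -
    have wH: "w \<in> H" using w Hm by simp
    show ?thesis unfolding good_def
    proof (intro conjI allI)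
      show "w \<in> Sb" using HS wH by auto
      fix k
      have wk: "w + of_nat k \<in> H" by (rule Hsh[OF wH])
      show "R < norm (psi (w + of_nat k))" by (rule Hpsi[OF wk])
      show "L (w + of_nat k + 1) = of_nat d * L (w + of_nat k) + G (psi (w + of_nat k))"
        using fz[OF wk] unfolding f_def by (simp add: algebra_simps)
    qed
  qed
  then show ?thesis by blast
qed

end


context ctx3 begin

definition s where "s w n = L (w + of_nat n) / of_nat d ^ n"
definition Eb where "Eb w = 2 * C / norm (psi w) / (real d - 1)"
definition B where "B w = lim (s w)"

lemma d_gt1: "real d > 1" using d2 by simp

lemma good_R: "good w \<Longrightarrow> R < norm (psi w)"
proof -
  assume g: "good w"
  then have "R < norm (psi (w + of_nat 0))" unfolding good_def by blast
  then show ?thesis by simp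
qed

lemma good_psi_grow: "good w \<Longrightarrow> norm (psi w) \<le> norm (psi (w + of_nat k))"
proof -
  assume g: "good w"
  then have Rw: "R \<le> norm (psi w)" using good_R less_imp_le by blast
  have "2^k * norm (psi w) \<le> norm (psi (w + of_nat k))"
    using iter_growth[OF grow R0 Rw, of k] psi_shift by simp
  moreover have "1 * norm (psi w) \<le> 2^k * norm (psi w)" by (intro mult_right_mono) auto
  ultimately show ?thesis by simp
qed

lemma s_step:
  assumes g: "good w"
  shows "s w (Suc n) - s w n = G (psi (w + of_nat n)) / of_nat d ^ Suc n"
proof -
  have e: "L (w + of_nat n + 1) = of_nat d * L (w + of_nat n) + G (psi (w + of_nat n))"
    using g unfolding good_def by blast
  have eq: "w + of_nat (Suc n) = w + of_nat n + 1" by simp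
  have "L (w + of_nat (Suc n)) = L (w + of_nat n + 1)" using eq by (rule arg_cong)
  from this e have "L (w + of_nat (Suc n)) = of_nat d * L (w + of_nat n) + G (psi (w + of_nat n))"
    by (rule trans)
  then show ?thesis unfolding s_def using d2 by (simp add: field_simps)
qed

lemma tele_arith:
  fixes x a b K :: real
  assumes "x > 1" "a > 0" "b > 0"
  shows "K / (x * b) + K / (x - 1) * (1 / a - 1 / b) = K / (x - 1) * (1 / a - 1 / (x * b))"
  using assms by (simp add: field_simps)

lemma tele:
  assumes g: "good w" and mn: "m \<le> n"
  shows "norm (s w n - s w m) \<le> Eb w * (1 / real d ^ m - 1 / real d ^ n)"
  using mn
proof (induction n rule: nat_induct_at_least)
  case base then show ?case by simp
next
  case (Suc n)
  have Rw: "R < norm (psi w)" using g by (rule good_R)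
  have Rn: "R \<le> norm (psi (w + of_nat n))" using g unfolding good_def by (meson less_imp_le)
  have "norm (G (psi (w + of_nat n))) \<le> 2 * C / norm (psi (w + of_nat n))" by (rule G_props(2)[OF Rn])
  also have "\<dots> \<le> 2 * C / norm (psi w)"
    using good_psi_grow[OF g, of n] Rw R0 C0 by (intro divide_left_mono mult_pos_pos) auto
  finally have Gb: "norm (G (psi (w + of_nat n))) \<le> 2 * C / norm (psi w)" .
  have T1: "norm (s w (Suc n) - s w m) \<le> norm (s w (Suc n) - s w n) + norm (s w n - s w m)"
    using norm_triangle_ineq[of "s w (Suc n) - s w n" "s w n - s w m"] by simp
  have "norm (s w (Suc n) - s w n) = norm (G (psi (w + of_nat n))) / real d ^ Suc n"
    using s_step[OF g] by (simp add: norm_divide norm_power norm_mult)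
  also have "\<dots> \<le> 2 * C / norm (psi w) / real d ^ Suc n"
    using Gb d2 by (intro divide_right_mono) auto
  finally have T2: "norm (s w (Suc n) - s w n) \<le> 2 * C / norm (psi w) / real d ^ Suc n" .
  have T3: "2 * C / norm (psi w) / real d ^ Suc n + Eb w * (1 / real d ^ m - 1 / real d ^ n)
      = Eb w * (1 / real d ^ m - 1 / real d ^ Suc n)"
    unfolding Eb_def using tele_arith[OF d_gt1, of "real d ^ m" "real d ^ n" "2 * C / norm (psi w)"] d2
    by simp
  show ?case using T1 T2 T3 Suc.IH by linarith
qed

lemma tele':
  assumes g: "good w" and mn: "m \<le> n"
  shows "norm (s w n - s w m) \<le> Eb w / real d ^ m"
proof -
  have "Eb w \<ge> 0" unfolding Eb_def using C0 d_gt1 by simp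
  then have "Eb w * (1 / real d ^ m - 1 / real d ^ n) \<le> Eb w * (1 / real d ^ m)"
    by (intro mult_left_mono) auto
  then show ?thesis using tele[OF assms] by simp
qed

lemma Eb_le: "good w \<Longrightarrow> Eb w \<le> 2 * C / R / (real d - 1)"
proof -
  assume g: "good w"
  have Rw: "R < norm (psi w)" using g by (rule good_R)
  have "2 * C / norm (psi w) \<le> 2 * C / R" using Rw R0 C0 by (intro divide_left_mono mult_pos_pos) auto
  then show ?thesis unfolding Eb_def using d_gt1 by (intro divide_right_mono) auto
qed

lemma conv_good:
  assumes g: "good w"
  shows "s w \<longlonglongrightarrow> B w" "\<And>m. norm (B w - s w m) \<le> Eb w / real d ^ m"
proof -
  have Eb0: "Eb w \<ge> 0" unfolding Eb_def using C0 d_gt1 by simp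
  have "Cauchy (s w)"
  proof (rule CauchyI)
    fix e :: real assume e: "e > 0"
    obtain M where M: "2 * Eb w / e < real d ^ M" using real_arch_pow[OF d_gt1] by auto
    have dM: "real d ^ M > 0" using d2 by simp
    have "\<forall>m\<ge>M. \<forall>n\<ge>M. norm (s w m - s w n) < e"
    proof (intro allI impI)
      fix m n assume mn: "M \<le> m" "M \<le> n"
      have "norm (s w m - s w n) \<le> norm (s w m - s w M) + norm (s w n - s w M)"
        using norm_triangle_ineq4[of "s w m - s w M" "s w n - s w M"] by simp
      also have "\<dots> \<le> Eb w / real d ^ M + Eb w / real d ^ M"
        using tele'[OF g mn(1)] tele'[OF g mn(2)] by simp
      also have "\<dots> < e" using M dM e by (simp add: field_simps)
      finally show "norm (s w m - s w n) < e" .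
    qed
    then show "\<exists>M. \<forall>m\<ge>M. \<forall>n\<ge>M. norm (s w m - s w n) < e" by blast
  qed
  then have "convergent (s w)" by (simp add: Cauchy_convergent_iff)
  then show lim: "s w \<longlonglongrightarrow> B w" unfolding B_def by (simp add: convergent_LIMSEQ_iff)
  fix m
  have "(\<lambda>n. norm (s w n - s w m)) \<longlonglongrightarrow> norm (B w - s w m)"
    by (intro tendsto_intros lim)
  then show "norm (B w - s w m) \<le> Eb w / real d ^ m"
    by (rule LIMSEQ_le_const2) (use tele'[OF g] in auto)
qed

lemma good_Sb: "good w \<Longrightarrow> w \<in> Sb" unfolding good_def by simp

lemma good_shift_ex:
  assumes w: "w \<in> Sb"
  shows "\<exists>n0. good (w + of_nat n0)"
proof -
  define \<eta> where "\<eta> = (\<bar>Im w\<bar> * ll + \<beta>) / 2"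
  have wS: "\<bar>Im w\<bar> * ll < \<beta>" using w ll_pos unfolding Sb_def by (simp add: field_simps)
  have eta: "0 < \<eta>" "\<eta> < \<beta>" unfolding \<eta>_def using wS beta0 ll_pos by (auto intro: add_nonneg_pos)
  have aux: "\<And>X::real. X < \<beta> \<Longrightarrow> X < (X + \<beta>) / 2" by (simp add: field_simps)
  have "\<bar>Im w\<bar> * ll < \<eta>" unfolding \<eta>_def by (rule aux[OF wS])
  then have imw: "\<bar>Im w\<bar> < \<eta> / ll" using ll_pos by (simp add: field_simps)
  obtain N where N: "\<And>w. \<bar>Im w\<bar> < \<eta> / ll \<and> N < Re w \<Longrightarrow> good w" using relation[OF eta] by blast
  define n where "n = nat \<lceil>N - Re w + 1\<rceil>"
  have "real n \<ge> N - Re w + 1" unfolding n_def by (rule real_nat_ceiling_ge)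
  then have "N < Re (w + of_nat n)" by simp
  then have "good (w + of_nat n)" using N[of "w + of_nat n"] imw by simp
  then show ?thesis by blast
qed

lemma s_shift: "s w (k + n0) = s (w + of_nat n0) k / of_nat d ^ n0"
proof -
  have "w + of_nat (k + n0) = (w + of_nat n0) + of_nat k" by simp
  then have Leq: "L (w + of_nat (k + n0)) = L ((w + of_nat n0) + of_nat k)" by (rule arg_cong)
  show ?thesis unfolding s_def using d2 by (simp only: Leq) (simp add: power_add mult.commute)
qed

lemma conv_all:
  assumes w: "w \<in> Sb"
  shows "s w \<longlonglongrightarrow> B w" "\<And>n0. good (w + of_nat n0) \<Longrightarrow> B w = B (w + of_nat n0) / of_nat d ^ n0"
proof -
  obtain n0 where g: "good (w + of_nat n0)" using good_shift_ex[OF w] by blast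
  have "(\<lambda>k. s w (k + n0)) \<longlonglongrightarrow> B (w + of_nat n0) / of_nat d ^ n0"
    unfolding s_shift by (intro tendsto_intros conv_good(1)[OF g]) (use d2 in simp)
  then have l: "s w \<longlonglongrightarrow> B (w + of_nat n0) / of_nat d ^ n0" by (rule LIMSEQ_offset)
  then have "convergent (s w)" unfolding convergent_def by blast
  then show sl: "s w \<longlonglongrightarrow> B w" unfolding B_def by (simp add: convergent_LIMSEQ_iff)
  fix n1 assume g1: "good (w + of_nat n1)"
  have "(\<lambda>k. s w (k + n1)) \<longlonglongrightarrow> B (w + of_nat n1) / of_nat d ^ n1"
    unfolding s_shift by (intro tendsto_intros conv_good(1)[OF g1]) (use d2 in simp)
  then have "s w \<longlonglongrightarrow> B (w + of_nat n1) / of_nat d ^ n1" by (rule LIMSEQ_offset)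
  then show "B w = B (w + of_nat n1) / of_nat d ^ n1" using sl LIMSEQ_unique by blast
qed

lemma B_succ:
  assumes w: "w \<in> Sb"
  shows "B (w + 1) = of_nat d * B w"
proof -
  have w1: "w + 1 \<in> Sb" using Sb_shift w by auto
  have eq: "s (w + 1) n = of_nat d * s w (Suc n)" for n
    unfolding s_def using d2 by (simp add: field_simps add.assoc)
  have "(\<lambda>n. s w (Suc n)) \<longlonglongrightarrow> B w" using conv_all(1)[OF w] by (rule LIMSEQ_Suc)
  then have "(\<lambda>n. of_nat d * s w (Suc n)) \<longlonglongrightarrow> of_nat d * B w" by (intro tendsto_intros)
  then have "s (w + 1) \<longlonglongrightarrow> of_nat d * B w" unfolding eq[symmetric] .
  then show ?thesis using conv_all(1)[OF w1] LIMSEQ_unique by blast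
qed

lemma B_real: "B (of_real x) \<in> \<real>"
proof -
  have xS: "of_real x \<in> Sb" by (rule Sb_real)
  have "Im (s (of_real x) n) = 0" for n
  proof -
    have "L (of_real x + of_nat n) \<in> \<real>" using L_real[of "x + real n"] by simp
    then show ?thesis unfolding s_def by (simp add: complex_is_Real_iff)
  qed
  moreover have "(\<lambda>n. Im (s (of_real x) n)) \<longlonglongrightarrow> Im (B (of_real x))"
    by (intro tendsto_intros conv_all(1)[OF xS])
  ultimately have "(\<lambda>n. 0) \<longlonglongrightarrow> Im (B (of_real x))" by simp
  then have "Im (B (of_real x)) = 0" using LIMSEQ_unique[OF tendsto_const] by metis
  then show ?thesis by (simp add: complex_is_Real_iff)
qed

lemma B_L_good: "good w \<Longrightarrow> norm (B w - L w) \<le> Eb w"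
  using conv_good(2)[of w 0] unfolding s_def by simp

lemma ReL_good: "good w \<Longrightarrow> Re (L w) \<ge> ln (cc * norm (psi w)) \<and> ln (cc * norm (psi w)) \<ge> 2"
proof -
  assume g: "good w"
  have wS: "w \<in> Sb" using g good_Sb by auto
  have Rw: "R < norm (psi w)" using g by (rule good_R)
  have "exp (Re (L w)) = cc * norm (psi w)" using L_exp[OF wS] cc_pos
    by (metis norm_exp_eq_Re norm_mult norm_of_real abs_of_pos)
  then have "Re (L w) = ln (cc * norm (psi w))" by (metis ln_exp)
  moreover have "ln (cc * R) \<le> ln (cc * norm (psi w))"
  proof -
    have "cc * R \<le> cc * norm (psi w)" using Rw cc_pos by simp
    moreover have "0 < cc * norm (psi w)" using cc_pos R0 Rw by (intro mult_pos_pos) auto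
    ultimately show ?thesis using cc_pos R0 by (subst ln_le_cancel_iff) auto
  qed
  ultimately show ?thesis using Rc by simp
qed

lemma ReB_good: "good w \<Longrightarrow> Re (B w) \<ge> 1"
proof -
  assume g: "good w"
  have "Eb w \<le> 2 * C / R / (real d - 1)" by (rule Eb_le[OF g])
  also have "\<dots> \<le> 2 * C / R" using d_gt1 C0 R0 by (simp add: field_simps)
  also have "\<dots> \<le> 1" using RC R0 by (simp add: field_simps)
  finally have "norm (B w - L w) \<le> 1" using B_L_good[OF g] by simp
  then have "Re (L w) - Re (B w) \<le> 1" using abs_Re_le_cmod[of "B w - L w"] by simp
  then show ?thesis using ReL_good[OF g] by linarith
qed

end


context ctx3 begin

lemma s_holo: "(\<lambda>w. s w n) holomorphic_on Sb"
proof -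
  have "(L \<circ> (\<lambda>w. w + of_nat n)) holomorphic_on Sb"
    by (rule holomorphic_on_compose_gen[OF _ L_holo]) (auto intro!: holomorphic_intros simp: Sb_shift)
  then have "(\<lambda>w. L (w + of_nat n)) holomorphic_on Sb" by (simp add: o_def)
  moreover have "(of_nat d ^ n :: complex) \<noteq> 0" using d2 by simp
  ultimately show ?thesis unfolding s_def by (intro holomorphic_intros) auto
qed

lemma B_holo_local:
  assumes w0: "w0 \<in> Sb"
  shows "\<exists>\<rho>>0. B holomorphic_on ball w0 \<rho>"
proof -
  define \<eta> where "\<eta> = (\<bar>Im w0\<bar> * ll + \<beta>) / 2"
  have wS: "\<bar>Im w0\<bar> * ll < \<beta>" using w0 ll_pos unfolding Sb_def by (simp add: field_simps)
  have eta: "0 < \<eta>" "\<eta> < \<beta>" unfolding \<eta>_def using wS beta0 ll_pos by (auto intro: add_nonneg_pos)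
  have aux: "\<And>X::real. X < \<beta> \<Longrightarrow> X < (X + \<beta>) / 2" by (simp add: field_simps)
  have "\<bar>Im w0\<bar> * ll < \<eta>" unfolding \<eta>_def by (rule aux[OF wS])
  then have imw: "\<bar>Im w0\<bar> < \<eta> / ll" using ll_pos by (simp add: field_simps)
  have etab: "\<eta> / ll < \<beta> / ll" using eta ll_pos by (simp add: divide_strict_right_mono)
  obtain N where N: "\<And>w. \<bar>Im w\<bar> < \<eta> / ll \<and> N < Re w \<Longrightarrow> good w" using relation[OF eta] by blast
  define \<rho> where "\<rho> = min 1 ((\<eta> / ll - \<bar>Im w0\<bar>) / 2)"
  have pos: "(\<eta> / ll - \<bar>Im w0\<bar>) / 2 > 0" using imw by simp
  have \<rho>1: "\<rho> > 0" unfolding \<rho>_def using pos by simp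
  have \<rho>2: "\<rho> \<le> 1" unfolding \<rho>_def by (rule min.cobounded1)
  have \<rho>3: "\<rho> \<le> (\<eta> / ll - \<bar>Im w0\<bar>) / 2" unfolding \<rho>_def by (rule min.cobounded2)
  have \<rho>4: "2 * \<rho> \<le> \<eta> / ll - \<bar>Im w0\<bar>" using \<rho>3 by simp
  note \<rho> = \<rho>1 \<rho>2 \<rho>4
  define n0 where "n0 = nat \<lceil>N - Re w0 + 2\<rceil>"
  have n0: "real n0 \<ge> N - Re w0 + 2" unfolding n0_def by (rule real_nat_ceiling_ge)
  have inb: "good (w + of_nat n0) \<and> w \<in> Sb" if w: "w \<in> cball w0 \<rho>" for w
  proof -
    have dw: "norm (w - w0) \<le> \<rho>" using w by (simp add: dist_norm norm_minus_commute)
    have "\<bar>Im w - Im w0\<bar> \<le> \<rho>" using abs_Im_le_cmod[of "w - w0"] dw by simp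
    then have im: "\<bar>Im w\<bar> < \<eta> / ll" using \<rho> by linarith
    have "\<bar>Re w - Re w0\<bar> \<le> \<rho>" using abs_Re_le_cmod[of "w - w0"] dw by simp
    then have "N < Re (w + of_nat n0)" using \<rho> n0 by simp
    then have "good (w + of_nat n0)" using N[of "w + of_nat n0"] im by simp
    moreover have "w \<in> Sb" unfolding Sb_def using im etab by simp
    ultimately show ?thesis by simp
  qed
  define E0 where "E0 = 2 * C / R / (real d - 1)"
  have E0: "E0 > 0" unfolding E0_def using C0 R0 d_gt1 by simp
  have ul: "uniform_limit (cball w0 \<rho>) (\<lambda>n w. s w n) B sequentially"
  proof (rule uniform_limitI)
    fix e :: real assume e: "e > 0"
    obtain M where M: "E0 / e < real d ^ M" using real_arch_pow[OF d_gt1] by auto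
    have "\<forall>w\<in>cball w0 \<rho>. dist (s w n) (B w) < e" if n: "n \<ge> max M n0" for n
    proof
      fix w assume w: "w \<in> cball w0 \<rho>"
      have g: "good (w + of_nat n0)" and wS: "w \<in> Sb" using inb[OF w] by auto
      have Bw: "B w = B (w + of_nat n0) / of_nat d ^ n0" using conv_all(2)[OF wS g] .
      have sw: "s w n = s (w + of_nat n0) (n - n0) / of_nat d ^ n0"
        using s_shift[of w "n - n0" n0] n by simp
      have dn0: "(of_nat d ^ n0 :: complex) \<noteq> 0" using d2 by simp
      have "dist (s w n) (B w) = norm (s (w + of_nat n0) (n - n0) - B (w + of_nat n0)) / real d ^ n0"
        unfolding dist_norm sw Bw using dn0 by (simp add: diff_divide_distrib[symmetric] norm_divide norm_power)
      also have "\<dots> \<le> Eb (w + of_nat n0) / real d ^ (n - n0) / real d ^ n0"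
        using conv_good(2)[OF g, of "n - n0"] d2 by (intro divide_right_mono) (auto simp: norm_minus_commute)
      also have "\<dots> \<le> E0 / real d ^ (n - n0) / real d ^ n0"
        using Eb_le[OF g] d2 unfolding E0_def by (intro divide_right_mono) auto
      also have "\<dots> = E0 / real d ^ n" using n d2 by (simp add: power_add[symmetric])
      also have "\<dots> \<le> E0 / real d ^ M"
        using n E0 d_gt1 by (intro divide_left_mono power_increasing) auto
      also have "\<dots> < e" using M e d_gt1 by (simp add: field_simps)
      finally show "dist (s w n) (B w) < e" .
    qed
    then show "\<forall>\<^sub>F n in sequentially. \<forall>w\<in>cball w0 \<rho>. dist (s w n) (B w) < e"
      unfolding eventually_sequentially by blast
  qed
  have cS: "cball w0 \<rho> \<subseteq> Sb" using inb by auto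
  have ev: "\<forall>\<^sub>F n in sequentially. continuous_on (cball w0 \<rho>) (\<lambda>w. s w n) \<and> (\<lambda>w. s w n) holomorphic_on ball w0 \<rho>"
    using holomorphic_on_subset[OF s_holo cS] holomorphic_on_subset[OF s_holo] cS ball_subset_cball
    by (intro always_eventually allI conjI holomorphic_on_imp_continuous_on) blast+
  obtain "continuous_on (cball w0 \<rho>) B" "B holomorphic_on ball w0 \<rho>"
    using holomorphic_uniform_limit[OF ev ul] by auto
  then show ?thesis using \<rho> by blast
qed

lemma B_holo: "B holomorphic_on Sb"
  unfolding holomorphic_on_open[OF Sb_open]
proof
  fix x assume x: "x \<in> Sb"
  obtain \<rho> where \<rho>: "\<rho> > 0" "B holomorphic_on ball x \<rho>" using B_holo_local[OF x] by blast
  then show "\<exists>f'. (B has_field_derivative f') (at x)"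
    using holomorphic_on_open[OF open_ball, of B x \<rho>] by auto
qed

lemma B_shift_pow: "v \<in> Sb \<Longrightarrow> B (v + of_nat n) = of_nat d ^ n * B v"
proof (induction n)
  case 0 then show ?case by simp
next
  case (Suc n)
  have "v + of_nat n \<in> Sb" using Suc.prems Sb_shift by auto
  then have "B (v + of_nat n + 1) = of_nat d * B (v + of_nat n)" by (rule B_succ)
  moreover have "v + of_nat (Suc n) = v + of_nat n + 1" by simp
  ultimately show ?case using Suc by (simp add: algebra_simps)
qed

end


lemma pow_beats_linear:
  fixes x a b :: real
  assumes x: "x \<ge> 2"
  shows "\<exists>n1. \<forall>n\<ge>n1. a + b * real n \<le> x ^ n"
proof -
  obtain n2 where n2: "\<bar>b\<bar> + 1 < x ^ n2" using real_arch_pow[of x "\<bar>b\<bar> + 1"] x by auto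
  define c where "c = x ^ n2 - b * real n2"
  have ind: "x ^ (n2 + k) - b * real (n2 + k) \<ge> c + real k" for k
  proof (induction k)
    case 0 then show ?case unfolding c_def by simp
  next
    case (Suc k)
    have X: "x ^ n2 \<le> x ^ (n2 + k)" using x by (intro power_increasing) auto
    have "2 * x ^ (n2 + k) \<le> x * x ^ (n2 + k)" by (rule mult_right_mono) (use x in auto)
    moreover have "x ^ (n2 + Suc k) = x * x ^ (n2 + k)" by simp
    ultimately have "x ^ (n2 + Suc k) \<ge> x ^ (n2 + k) + (\<bar>b\<bar> + 1)"
      using X n2 by linarith
    then show ?case using Suc by (simp add: algebra_simps)
  qed
  define n1 where "n1 = n2 + nat \<lceil>a - c\<rceil>"
  have "a + b * real n \<le> x ^ n" if n: "n \<ge> n1" for n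
  proof -
    define k where "k = n - n2"
    have nk: "n = n2 + k" unfolding k_def using n unfolding n1_def by simp
    have "real k \<ge> a - c" unfolding k_def using n unfolding n1_def
      by (metis add.commute le_diff_conv2 le_add1 le_trans of_nat_le_iff real_nat_ceiling_ge order_trans le_add_diff_inverse)
    then show ?thesis using ind[of k] nk by simp
  qed
  then show ?thesis by blast
qed

context ctx3 begin

definition F where "F w = B w / exp (w * of_real (ln (real d)))"

lemma Sb_eq: "{w. \<bar>Im w\<bar> < \<beta> / ln lam} = Sb" unfolding Sb_def ll_def by simp

lemma logw:
  assumes z: "z \<noteq> 0"
  defines "w \<equiv> log_base_c lam z"
  shows "Im w = Arg z / ll" "Re w = ln (norm z) / ll" "exp (w * of_real ll) = z"
    "z powr of_real (ln (real d) / ln lam) = exp (w * of_real (ln (real d)))"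
proof -
  have w: "w = Ln z / of_real ll" unfolding w_def log_base_c_def ll_def by simp
  show "Im w = Arg z / ll" unfolding w using z by (simp add: Arg_eq_Im_Ln)
  show "Re w = ln (norm z) / ll" unfolding w using z by simp
  show "exp (w * of_real ll) = z" unfolding w using z ll_pos by simp
  have "of_real (ln (real d) / ln lam) * Ln z = w * of_real (ln (real d))"
    unfolding w ll_def by (simp add: field_simps)
  then show "z powr of_real (ln (real d) / ln lam) = exp (w * of_real (ln (real d)))"
    using z by (simp add: powr_def)
qed

lemma sector_Sb:
  assumes z: "z \<noteq> 0" "\<bar>Arg z\<bar> \<le> \<beta> - \<epsilon>" "\<epsilon> > 0"
  shows "log_base_c lam z \<in> Sb"
proof -
  have "\<bar>Im (log_base_c lam z)\<bar> = \<bar>Arg z\<bar> / ll" using logw(1)[OF z(1)] ll_pos by simp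
  also have "\<dots> < \<beta> / ll" using z ll_pos by (simp add: divide_strict_right_mono)
  finally show ?thesis unfolding Sb_def by simp
qed

lemma powF:
  assumes z: "z \<noteq> 0"
  shows "z powr of_real (ln (real d) / ln lam) * F (log_base_c lam z) = B (log_base_c lam z)"
  unfolding logw(4)[OF z] F_def by simp

lemma Eb_le1: "good w \<Longrightarrow> Eb w \<le> 1"
proof -
  assume g: "good w"
  have "Eb w \<le> 2 * C / R / (real d - 1)" by (rule Eb_le[OF g])
  also have "\<dots> \<le> 2 * C / R" using d_gt1 C0 R0 by (simp add: field_simps)
  also have "\<dots> \<le> 1" using RC R0 by (simp add: field_simps)
  finally show ?thesis .
qed

lemma main_bound:
  assumes eps: "\<epsilon> > 0" and M: "M > 0" and del: "\<delta> > 0"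
  shows "\<exists>R'. \<forall>z. z \<noteq> 0 \<and> \<bar>Arg z\<bar> \<le> \<beta> - \<epsilon> \<and> norm z > R' \<longrightarrow>
            norm (L (log_base_c lam z) - B (log_base_c lam z)) \<le> \<delta> * norm z powr (- M)"
proof -
  define \<eta> where "\<eta> = max (\<beta> - \<epsilon> / 2) (\<beta> / 2)"
  have eta: "0 < \<eta>" "\<eta> < \<beta>" unfolding \<eta>_def using eps beta0 by auto
  have etae: "\<beta> - \<epsilon> < \<eta>" unfolding \<eta>_def using eps by auto
  obtain N where N: "\<And>w. \<bar>Im w\<bar> < \<eta> / ll \<and> N < Re w \<Longrightarrow> good w" using relation[OF eta] by blast
  define K0 where "K0 = 2 * C * cc * exp 1"
  have K0: "K0 > 0" unfolding K0_def using C0 cc_pos by simp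
  obtain n1 where n1: "\<And>n. n \<ge> n1 \<Longrightarrow> ln (K0 / \<delta>) + M * ll * (N + 1) + M * ll * real n \<le> real d ^ n"
    using pow_beats_linear[of "real d" "ln (K0 / \<delta>) + M * ll * (N + 1)" "M * ll"] d2 by auto
  define R' where "R' = exp (ll * (N + real n1 + 1))"
  have "norm (L (log_base_c lam z) - B (log_base_c lam z)) \<le> \<delta> * norm z powr (- M)"
    if z: "z \<noteq> 0" "\<bar>Arg z\<bar> \<le> \<beta> - \<epsilon>" "norm z > R'" for z
  proof -
    define w where "w = log_base_c lam z"
    have imw: "\<bar>Im w\<bar> < \<eta> / ll"
    proof -
      have "\<bar>Im w\<bar> = \<bar>Arg z\<bar> / ll" unfolding w_def using logw(1)[OF z(1)] ll_pos by simp
      also have "\<dots> < \<eta> / ll" using z(2) etae ll_pos by (simp add: divide_strict_right_mono)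
      finally show ?thesis .
    qed
    have rew: "Re w = ln (norm z) / ll" unfolding w_def by (rule logw(2)[OF z(1)])
    have nz: "norm z > 0" using z(1) by simp
    have "exp (ll * (N + real n1 + 1)) < exp (ln (norm z))" using z(3) nz unfolding R'_def by simp
    then have "ll * (N + real n1 + 1) < ln (norm z)" by simp
    then have rw1: "N + real n1 + 1 < Re w" unfolding rew using ll_pos by (simp add: field_simps)
    define n where "n = nat (\<lceil>Re w - N\<rceil> - 1)"
    have nlo: "real n \<ge> Re w - N - 1" unfolding n_def using rw1 by linarith
    have nhi: "real n < Re w - N" unfolding n_def using rw1 by linarith
    have nn1: "n \<ge> n1" using nlo rw1 by linarith
    define v where "v = w - of_nat n"
    have gv: "good v" using N[of v] imw nhi unfolding v_def by simp
    have gw: "good w" using N[of w] imw rw1 by simp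
    have vS: "v \<in> Sb" using gv good_Sb by auto
    have wv: "w = v + of_nat n" unfolding v_def by simp
    have "B w = of_nat d ^ n * B v" unfolding wv by (rule B_shift_pow[OF vS])
    then have "Re (B w) = real d ^ n * Re (B v)" by simp
    moreover have "Re (B v) \<ge> 1" by (rule ReB_good[OF gv])
    ultimately have ReB: "Re (B w) \<ge> real d ^ n" using d2
      by (metis mult.right_neutral mult_left_mono of_nat_0_le_iff zero_le_power)
    have BL: "norm (B w - L w) \<le> 1" using B_L_good[OF gw] Eb_le1[OF gw] by simp
    then have "Re (B w) - Re (L w) \<le> 1" using abs_Re_le_cmod[of "B w - L w"] by simp
    then have ReL: "Re (L w) \<ge> real d ^ n - 1" using ReB by linarith
    have wS: "w \<in> Sb" using gw good_Sb by auto
    have npsi: "norm (psi w) = exp (Re (L w)) / cc"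
    proof -
      have "norm (exp (L w)) = cc * norm (psi w)" using L_exp[OF wS] cc_pos by (simp add: norm_mult)
      then show ?thesis using cc_pos by (simp add: field_simps)
    qed
    have "norm (L w - B w) \<le> Eb w" using B_L_good[OF gw] by (simp add: norm_minus_commute)
    also have "\<dots> \<le> 2 * C / norm (psi w)"
    proof -
      have X: "2 * C / norm (psi w) \<ge> 0" using C0 by simp
      have "1 \<le> real d - 1" using d2 by simp
      then have "2 * C / norm (psi w) / (real d - 1) \<le> 2 * C / norm (psi w) / 1"
        using X by (intro divide_left_mono) auto
      then show ?thesis unfolding Eb_def by simp
    qed
    also have "\<dots> = 2 * C * cc / exp (Re (L w))" unfolding npsi using cc_pos by (simp add: field_simps)
    also have "\<dots> \<le> 2 * C * cc / exp (real d ^ n - 1)"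
      using ReL C0 cc_pos by (intro divide_left_mono mult_pos_pos) auto
    also have "\<dots> = K0 * exp (- (real d ^ n))" unfolding K0_def by (simp add: exp_diff exp_minus field_simps)
    also have "\<dots> \<le> \<delta> * exp (- (M * ll * (N + real n + 1)))"
    proof -
      have "ln (K0 / \<delta>) + M * ll * (N + real n + 1) \<le> real d ^ n"
        using n1[OF nn1] by (simp add: algebra_simps)
      then have "exp (ln (K0 / \<delta>) + M * ll * (N + real n + 1)) \<le> exp (real d ^ n)" by simp
      then have "K0 / \<delta> * exp (M * ll * (N + real n + 1)) \<le> exp (real d ^ n)"
        using K0 del by (simp add: exp_add)
      then have h1: "K0 * exp (M * ll * (N + real n + 1)) \<le> \<delta> * exp (real d ^ n)"
        using del by (simp add: field_simps)
      define A where "A = M * ll * (N + real n + 1)"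
      define D where "D = real d ^ n"
      have "K0 * exp (- D) = K0 * exp A * exp (- A - D)" by (simp add: mult.assoc exp_add[symmetric])
      also have "\<dots> \<le> \<delta> * exp D * exp (- A - D)"
        using h1 unfolding A_def D_def by (intro mult_right_mono) auto
      also have "\<dots> = \<delta> * exp (- A)" by (simp add: mult.assoc exp_add[symmetric])
      finally show ?thesis unfolding A_def D_def .
    qed
    also have "\<dots> \<le> \<delta> * norm z powr (- M)"
    proof -
      have "norm z powr (- M) = exp (- M * ln (norm z))" using z(1) by (simp add: powr_def)
      also have "ln (norm z) = ll * Re w" unfolding rew using ll_pos by simp
      finally have "norm z powr (- M) = exp (- (M * ll * Re w))" by simp
      moreover have "M * ll * Re w \<le> M * ll * (N + real n + 1)"
        using nlo M ll_pos by (intro mult_left_mono) auto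
      ultimately show ?thesis using del by simp
    qed
    finally show ?thesis unfolding w_def .
  qed
  then show ?thesis by blast
qed

lemma main:
  shows "\<Phi> holomorphic_on UNIV \<and>
    (\<exists>F :: complex \<Rightarrow> complex.
       F holomorphic_on {w. \<bar>Im w\<bar> < \<beta> / ln lam} \<and>
       (\<forall>w. \<bar>Im w\<bar> < \<beta> / ln lam \<longrightarrow> F (w + 1) = F w) \<and>
       (\<forall>x::real. F (of_real x) \<in> \<real>) \<and>
       (\<forall>\<epsilon>>0. \<forall>M>0.
          (\<exists>E :: complex \<Rightarrow> complex.
             (\<forall>z. z \<noteq> 0 \<and> \<bar>Arg z\<bar> \<le> \<beta> - \<epsilon> \<longrightarrow>
                \<Phi> z = (1 / of_real (root (d - 1) (Re (lead_coeff p)))) *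
                        exp (z powr of_real (ln (real d) / ln lam) * F (log_base_c lam z) + E z)) \<and>
             (\<forall>\<delta>>0. \<exists>R. \<forall>z. z \<noteq> 0 \<and> \<bar>Arg z\<bar> \<le> \<beta> - \<epsilon> \<and> norm z > R \<longrightarrow>
                norm (E z) \<le> \<delta> * norm z powr (- M)))) \<and>
       (\<forall>\<epsilon>>0. \<forall>z. z \<noteq> 0 \<and> \<bar>Arg z\<bar> \<le> \<beta> - \<epsilon> \<longrightarrow>
          Re (z powr of_real (ln (real d) / ln lam) * F (log_base_c lam z)) > 0))"
proof (intro conjI exI[of _ F])
  show "\<Phi> holomorphic_on UNIV" by (rule Phi_entire)
  show "F holomorphic_on {w. \<bar>Im w\<bar> < \<beta> / ln lam}" unfolding Sb_eq F_def
    by (intro holomorphic_intros B_holo) auto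
  show "\<forall>w. \<bar>Im w\<bar> < \<beta> / ln lam \<longrightarrow> F (w + 1) = F w"
  proof (intro allI impI)
    fix w assume "\<bar>Im w\<bar> < \<beta> / ln lam"
    then have wS: "w \<in> Sb" using Sb_eq by auto
    have ed: "exp (of_real (ln (real d)) :: complex) = of_nat d" using d2 by (simp add: exp_of_real)
    have "exp ((w + 1) * of_real (ln (real d))) = exp (w * of_real (ln (real d))) * of_nat d"
      using ed by (simp add: distrib_right exp_add)
    then show "F (w + 1) = F w" unfolding F_def B_succ[OF wS] using d2 by simp
  qed
  show "\<forall>x::real. F (of_real x) \<in> \<real>"
  proof
    fix x :: real
    have "exp (of_real x * of_real (ln (real d)) :: complex) = of_real (exp (x * ln (real d)))"
      by (simp add: exp_of_real[symmetric])
    then show "F (of_real x) \<in> \<real>" unfolding F_def using B_real[of x] by (simp add: Reals_divide)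
  qed
  show "\<forall>\<epsilon>>0. \<forall>M>0.
          (\<exists>E :: complex \<Rightarrow> complex.
             (\<forall>z. z \<noteq> 0 \<and> \<bar>Arg z\<bar> \<le> \<beta> - \<epsilon> \<longrightarrow>
                \<Phi> z = (1 / of_real (root (d - 1) (Re (lead_coeff p)))) *
                        exp (z powr of_real (ln (real d) / ln lam) * F (log_base_c lam z) + E z)) \<and>
             (\<forall>\<delta>>0. \<exists>R. \<forall>z. z \<noteq> 0 \<and> \<bar>Arg z\<bar> \<le> \<beta> - \<epsilon> \<and> norm z > R \<longrightarrow>
                norm (E z) \<le> \<delta> * norm z powr (- M)))"
  proof (intro allI impI)
    fix \<epsilon> M :: real assume eps: "\<epsilon> > 0" and M: "M > 0"
    define E where "E z = L (log_base_c lam z) - B (log_base_c lam z)" for z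
    have eq: "\<Phi> z = (1 / of_real (root (d - 1) (Re (lead_coeff p)))) *
                exp (z powr of_real (ln (real d) / ln lam) * F (log_base_c lam z) + E z)"
      if z: "z \<noteq> 0 \<and> \<bar>Arg z\<bar> \<le> \<beta> - \<epsilon>" for z
    proof -
      have wS: "log_base_c lam z \<in> Sb" using sector_Sb[of z \<epsilon>] z eps by auto
      have "z powr of_real (ln (real d) / ln lam) * F (log_base_c lam z) + E z = L (log_base_c lam z)"
        unfolding powF[OF conjunct1[OF z]] E_def by simp
      moreover have "exp (L (log_base_c lam z)) = of_real cc * \<Phi> z"
        using L_exp[OF wS] logw(3)[OF conjunct1[OF z]] unfolding psi_def by simp
      ultimately show ?thesis using cc_pos unfolding cc_def[symmetric] by simp
    qed
    have bd: "\<forall>\<delta>>0. \<exists>R. \<forall>z. z \<noteq> 0 \<and> \<bar>Arg z\<bar> \<le> \<beta> - \<epsilon> \<and> norm z > R \<longrightarrow>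
                norm (E z) \<le> \<delta> * norm z powr (- M)"
      unfolding E_def using main_bound[OF eps M] by blast
    show "\<exists>E :: complex \<Rightarrow> complex.
             (\<forall>z. z \<noteq> 0 \<and> \<bar>Arg z\<bar> \<le> \<beta> - \<epsilon> \<longrightarrow>
                \<Phi> z = (1 / of_real (root (d - 1) (Re (lead_coeff p)))) *
                        exp (z powr of_real (ln (real d) / ln lam) * F (log_base_c lam z) + E z)) \<and>
             (\<forall>\<delta>>0. \<exists>R. \<forall>z. z \<noteq> 0 \<and> \<bar>Arg z\<bar> \<le> \<beta> - \<epsilon> \<and> norm z > R \<longrightarrow>
                norm (E z) \<le> \<delta> * norm z powr (- M))"
      using eq bd by blast
  qed
  show "\<forall>\<epsilon>>0. \<forall>z. z \<noteq> 0 \<and> \<bar>Arg z\<bar> \<le> \<beta> - \<epsilon> \<longrightarrow>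
          Re (z powr of_real (ln (real d) / ln lam) * F (log_base_c lam z)) > 0"
  proof (intro allI impI)
    fix \<epsilon> z assume eps: "\<epsilon> > 0" and z: "z \<noteq> 0 \<and> \<bar>Arg z\<bar> \<le> \<beta> - \<epsilon>"
    define w where "w = log_base_c lam z"
    have wS: "w \<in> Sb" unfolding w_def using sector_Sb[of z \<epsilon>] z eps by auto
    obtain n0 where g: "good (w + of_nat n0)" using good_shift_ex[OF wS] by blast
    have "B w = B (w + of_nat n0) / of_nat d ^ n0" by (rule conv_all(2)[OF wS g])
    then have "Re (B w) = Re (B (w + of_nat n0)) / real d ^ n0" by simp
    moreover have "Re (B (w + of_nat n0)) \<ge> 1" by (rule ReB_good[OF g])
    ultimately have "Re (B w) > 0" using d2 by (simp add: less_le_trans[OF zero_less_one] )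
    then show "Re (z powr of_real (ln (real d) / ln lam) * F (log_base_c lam z)) > 0"
      unfolding powF[OF conjunct1[OF z]] w_def .
  qed
qed

end


theorem theorem1:
  fixes p :: "complex poly" and d :: nat and lam \<beta> :: real and \<Phi> :: "complex \<Rightarrow> complex"
  assumes real_coeffs: "\<forall>i. coeff p i \<in> \<real>"
    and deg: "degree p = d" "d \<ge> 2"
    and p0: "coeff p 0 = 0"
    and p1: "coeff p 1 = of_real lam" "lam > 1"
    and beta: "\<beta> > 0" "angular_region \<beta> \<subseteq> fatou_inf p"
    and Phi_hol0: "\<exists>r>0. \<Phi> holomorphic_on ball 0 r"
    and Phi_eq: "\<forall>z. \<Phi> (of_real lam * z) = poly p (\<Phi> z)"
    and Phi0: "\<Phi> 0 = 0"
    and Phi'0: "(\<Phi> has_field_derivative 1) (at 0)"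
  shows "\<Phi> holomorphic_on UNIV \<and>
    (\<exists>F :: complex \<Rightarrow> complex.
       F holomorphic_on {w. \<bar>Im w\<bar> < \<beta> / ln lam} \<and>
       (\<forall>w. \<bar>Im w\<bar> < \<beta> / ln lam \<longrightarrow> F (w + 1) = F w) \<and>
       (\<forall>x::real. F (of_real x) \<in> \<real>) \<and>
       (\<forall>\<epsilon>>0. \<forall>M>0.
          (\<exists>E :: complex \<Rightarrow> complex.
             (\<forall>z. z \<noteq> 0 \<and> \<bar>Arg z\<bar> \<le> \<beta> - \<epsilon> \<longrightarrow>
                \<Phi> z = (1 / of_real (root (d - 1) (Re (lead_coeff p)))) *
                        exp (z powr of_real (ln (real d) / ln lam) * F (log_base_c lam z) + E z)) \<and>
             (\<forall>\<delta>>0. \<exists>R. \<forall>z. z \<noteq> 0 \<and> \<bar>Arg z\<bar> \<le> \<beta> - \<epsilon> \<and> norm z > R \<longrightarrow>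
                norm (E z) \<le> \<delta> * norm z powr (- M)))) \<and>
       (\<forall>\<epsilon>>0. \<forall>z. z \<noteq> 0 \<and> \<bar>Arg z\<bar> \<le> \<beta> - \<epsilon> \<longrightarrow>
          Re (z powr of_real (ln (real d) / ln lam) * F (log_base_c lam z)) > 0))"
proof -
  interpret c: ctx p d lam \<beta> \<Phi>
    by (rule ctx.intro[OF real_coeffs deg(1) deg(2) p0 p1(1) p1(2) beta(1) beta(2) Phi_hol0 Phi_eq Phi0 Phi'0])
  obtain R0 C where RC: "R0 > 0" "C > 0"
    "\<And>u. R0 \<le> norm u \<Longrightarrow> 2 * norm u \<le> norm (poly p u)"
    "\<And>u. R0 \<le> norm u \<Longrightarrow> norm (poly p u / (lead_coeff p * u ^ d) - 1) \<le> C / norm u"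
    "\<And>u::complex. R0 \<le> norm u \<Longrightarrow> C / norm u \<le> 1/4"
    using poly_infty_est[OF deg] by metis
  define R where "R = max R0 (max (8 * C) (exp 2 / c.cc))"
  have R: "R \<ge> R0" "R \<ge> 8 * C" "R \<ge> exp 2 / c.cc" unfolding R_def by auto
  have Rpos: "R > 0" using R(1) RC(1) by linarith
  have e2: "exp 2 \<le> c.cc * R" using R(3) c.cc_pos by (simp add: field_simps)
  have pos: "0 < c.cc * R" using c.cc_pos Rpos by simp
  have "ln (exp 2) \<le> ln (c.cc * R)" using e2 pos by (subst ln_le_cancel_iff) auto
  then have Rc: "2 \<le> ln (c.cc * R)" by simp
  interpret c2: ctx2 p d lam \<beta> \<Phi> R C
  proof unfold_locales
    show "R > 0" by (rule Rpos)
    show "C > 0" by (rule RC(2))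
    show "\<And>u. R \<le> norm u \<Longrightarrow> 2 * norm u \<le> norm (poly p u)" using RC(3) R(1) by force
    show "\<And>u. R \<le> norm u \<Longrightarrow> norm (poly p u / (lead_coeff p * u ^ d) - 1) \<le> C / norm u"
      using RC(4) R(1) by force
    show "8 * C \<le> R" by (rule R(2))
    show "2 \<le> ln (c.cc * R)" by (rule Rc)
  qed
  obtain L where L: "L holomorphic_on c.Sb" "\<forall>w\<in>c.Sb. exp (L w) = of_real c.cc * c.psi w"
    "\<forall>x. L (of_real x) \<in> \<real>"
    using c2.L_exists by blast
  interpret c3: ctx3 p d lam \<beta> \<Phi> R C L
    by (rule ctx3.intro[OF c2.ctx2_axioms], unfold_locales) (use L in auto)
  show ?thesis by (rule c3.main)
qed


end
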